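(* Let $\{(\tilde{\mathbf u}_r^n,p_r^n)\}_{n}$ with $\tilde{\mathbf u}_r^n\in U_r$, $p_r^n\in Q_r$ be the solution of the reduced BDF2 incremental projection scheme described in the context. Then there is a constant $c>0$, independent of $\tau$, $\nu$, $f$, $U_r$ and $Q_r$, such that for all $n\ge 2$ \[ \|\tilde{\mathbf u}_r^{n}\|_0^2+\tau^2\|\nabla p_r^{n}\|_0^2+\tau^2\|\nabla(p_r^{n-1}-p_r^{n-2})\|_0^2+\sum_{k=2}^{N_t}\Big(\nu\tau\|\nabla\tilde{\mathbf u}_r^{k}\|_0^2+\tau^2\|\nabla(p_r^{k-1}-p_r^{k-2})\|_0^2\Big) \] \[ \le c\Big(\|\tilde{\mathbf u}_r^{0}\|_0^2+\|\tilde{\mathbf u}_r^{1}\|_0^2+\tau^2\|\nabla p_r^{0}\|_0^2+\tau^2\|\nabla p_r^{1}\|_0^2+\nu^{-1}\sum_{k=2}^{N_t}\tau\|f^k\|_{H^{-1}}^2\Big). \]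
   Context: $\Omega\subset\mathbb R^2$ is a bounded domain with smooth boundary, $\nu>0$ is the viscosity, $T>0$, $\tau>0$ is the time step, $N_t=[T/\tau]$, $t^k=k\tau$, and $f^{k}=f(t^k)\in H^{-1}(\Omega)^2$ with $\langle\cdot,\cdot\rangle$ the $H^{-1}$–$H_0^1$ duality. $\|\cdot\|_0$ and $(\cdot,\cdot)$ denote the $L^2(\Omega)$ norm and inner product. $U_r\subset H_0^1(\Omega)^2$ and $Q_r\subset H^1(\Omega)$ are finite-dimensional subspaces (the POD velocity and pressure spaces). Reduced scheme: given starting values $\tilde{\mathbf u}_r^0,\tilde{\mathbf u}_r^1\in U_r$ and $p_r^0,p_r^1\in Q_r$ (with the convention $p_r^{-1}:=p_r^0$), for $n\ge1$ find $\tilde{\mathbf u}_r^{n+1}\in U_r$, $p_r^{n+1}\in Q_r$ such that \[ \Big(\tfrac{3\tilde{\mathbf u}_r^{n+1}-4\tilde{\mathbf u}_r^{n}+\tilde{\mathbf u}_r^{n-1}}{2\tau},\mathbf v_r\Big)+\nu(\nabla\tilde{\mathbf u}_r^{n+1},\nabla\mathbf v_r)-\tfrac13\big(7p_r^n-5p_r^{n-1}+p_r^{n-2},\nabla\cdot\mathbf v_r\big)=\langle f^{n+1},\mathbf v_r\rangle\quad\forall\mathbf v_r\in U_r, \] \[ (\nabla\cdot\tilde{\mathbf u}_r^{n+1},q_r)+\tfrac{2\tau}{3}(\nabla p_r^{n+1},\nabla q_r)=\tfrac{2\tau}{3}(\nabla p_r^{n},\nabla q_r)\quad\forall q_r\in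 Q_r. \] *)

theory Defs
  imports "HOL-Analysis.Analysis"
begin

definition pd :: "2 \<Rightarrow> (real^2 \<Rightarrow> real) \<Rightarrow> real^2 \<Rightarrow> real" where
  "pd i f x = deriv (\<lambda>t. f (x + t *\<^sub>R axis i 1)) 0"

fun Ck :: "nat \<Rightarrow> (real^2 \<Rightarrow> real) \<Rightarrow> bool" where
  "Ck 0 f = continuous_on UNIV f"
| "Ck (Suc k) f = (continuous_on UNIV f \<and>
      (\<forall>i x. (\<lambda>t. f (x + t *\<^sub>R axis i 1)) differentiable (at 0)) \<and>
      (\<forall>i. Ck k (pd i f)))"

definition C_inf :: "(real^2 \<Rightarrow> real) \<Rightarrow> bool" where
  "C_inf f \<longleftrightarrow> (\<forall>k. Ck k f)"

definition smooth_bounded_domain :: "(real^2) set \<Rightarrow> bool" where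
  "smooth_bounded_domain \<Omega> \<longleftrightarrow> open \<Omega> \<and> connected \<Omega> \<and> \<Omega> \<noteq> {} \<and> bounded \<Omega> \<and>
     (\<exists>\<rho>. C_inf \<rho> \<and> \<Omega> = {x. \<rho> x < 0} \<and> (\<forall>x\<in>frontier \<Omega>. \<exists>i. pd i \<rho> x \<noteq> 0))"

definition test_fun :: "(real^2) set \<Rightarrow> (real^2 \<Rightarrow> real) \<Rightarrow> bool" where
  "test_fun \<Omega> \<phi> \<longleftrightarrow> C_inf \<phi> \<and> compact (closure {x. \<phi> x \<noteq> 0}) \<and> closure {x. \<phi> x \<noteq> 0} \<subseteq> \<Omega>"

definition L2 :: "(real^2) set \<Rightarrow> (real^2 \<Rightarrow> real) \<Rightarrow> bool" where
  "L2 \<Omega> g \<longleftrightarrow> set_borel_measurable lborel \<Omega> g \<and> set_integrable lborel \<Omega> (\<lambda>x. (g x)^2)"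

definition weak_pd :: "(real^2) set \<Rightarrow> 2 \<Rightarrow> (real^2 \<Rightarrow> real) \<Rightarrow> (real^2 \<Rightarrow> real) \<Rightarrow> bool" where
  "weak_pd \<Omega> i u g \<longleftrightarrow> (\<forall>\<phi>. test_fun \<Omega> \<phi> \<longrightarrow>
      (LINT x:\<Omega>|lborel. u x * pd i \<phi> x) = - (LINT x:\<Omega>|lborel. g x * \<phi> x))"

definition H1 :: "(real^2) set \<Rightarrow> (real^2 \<Rightarrow> real) \<Rightarrow> bool" where
  "H1 \<Omega> u \<longleftrightarrow> L2 \<Omega> u \<and> (\<forall>i. \<exists>g. L2 \<Omega> g \<and> weak_pd \<Omega> i u g)"

(* the (a.e. unique) weak partial derivative *)
definition wpd :: "(real^2) set \<Rightarrow> 2 \<Rightarrow> (real^2 \<Rightarrow> real) \<Rightarrow> real^2 \<Rightarrow> real" where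
  "wpd \<Omega> i u = (SOME g. L2 \<Omega> g \<and> weak_pd \<Omega> i u g)"

definition ipS :: "(real^2) set \<Rightarrow> (real^2 \<Rightarrow> real) \<Rightarrow> (real^2 \<Rightarrow> real) \<Rightarrow> real" where
  "ipS \<Omega> p q = (LINT x:\<Omega>|lborel. p x * q x)"

definition ipV :: "(real^2) set \<Rightarrow> (real^2 \<Rightarrow> real^2) \<Rightarrow> (real^2 \<Rightarrow> real^2) \<Rightarrow> real" where
  "ipV \<Omega> u v = (LINT x:\<Omega>|lborel. u x \<bullet> v x)"

definition gradS :: "(real^2) set \<Rightarrow> (real^2 \<Rightarrow> real) \<Rightarrow> (real^2 \<Rightarrow> real) \<Rightarrow> real" where
  "gradS \<Omega> p q = (\<Sum>i\<in>UNIV. ipS \<Omega> (wpd \<Omega> i p) (wpd \<Omega> i q))"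

definition comp :: "2 \<Rightarrow> (real^2 \<Rightarrow> real^2) \<Rightarrow> real^2 \<Rightarrow> real" where
  "comp j u = (\<lambda>x. u x $ j)"

definition gradV :: "(real^2) set \<Rightarrow> (real^2 \<Rightarrow> real^2) \<Rightarrow> (real^2 \<Rightarrow> real^2) \<Rightarrow> real" where
  "gradV \<Omega> u v = (\<Sum>j\<in>UNIV. gradS \<Omega> (comp j u) (comp j v))"

definition divg :: "(real^2) set \<Rightarrow> (real^2 \<Rightarrow> real^2) \<Rightarrow> real^2 \<Rightarrow> real" where
  "divg \<Omega> u = (\<lambda>x. \<Sum>j\<in>UNIV. wpd \<Omega> j (comp j u) x)"

definition H1norm2 :: "(real^2) set \<Rightarrow> (real^2 \<Rightarrow> real) \<Rightarrow> real" where
  "H1norm2 \<Omega> u = ipS \<Omega> u u + gradS \<Omega> u u"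

definition H01 :: "(real^2) set \<Rightarrow> (real^2 \<Rightarrow> real) \<Rightarrow> bool" where
  "H01 \<Omega> u \<longleftrightarrow> H1 \<Omega> u \<and>
     (\<forall>\<epsilon>>0. \<exists>\<phi>. test_fun \<Omega> \<phi> \<and> H1norm2 \<Omega> (\<lambda>x. u x - \<phi> x) < \<epsilon>)"

definition H01V :: "(real^2) set \<Rightarrow> (real^2 \<Rightarrow> real^2) \<Rightarrow> bool" where
  "H01V \<Omega> u \<longleftrightarrow> (\<forall>j. H01 \<Omega> (comp j u))"

definition Hminus1 :: "(real^2) set \<Rightarrow> ((real^2 \<Rightarrow> real^2) \<Rightarrow> real) \<Rightarrow> bool" where
  "Hminus1 \<Omega> F \<longleftrightarrow>
     (\<forall>u v. H01V \<Omega> u \<and> H01V \<Omega> v \<longrightarrow> F (\<lambda>x. u x + v x) = F u + F v) \<and>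
     (\<forall>a u. H01V \<Omega> u \<longrightarrow> F (\<lambda>x. a *\<^sub>R u x) = a * F u) \<and>
     (\<exists>C. \<forall>v. H01V \<Omega> v \<longrightarrow> \<bar>F v\<bar> \<le> C * sqrt (gradV \<Omega> v v))"

definition normHm1 :: "(real^2) set \<Rightarrow> ((real^2 \<Rightarrow> real^2) \<Rightarrow> real) \<Rightarrow> real" where
  "normHm1 \<Omega> F = Sup {\<bar>F v\<bar> | v. H01V \<Omega> v \<and> gradV \<Omega> v v \<le> 1}"

definition fin_dim_subspaceV :: "(real^2) set \<Rightarrow> (real^2 \<Rightarrow> real^2) set \<Rightarrow> bool" where
  "fin_dim_subspaceV \<Omega> U \<longleftrightarrow> U \<subseteq> {u. H01V \<Omega> u} \<and>
     (\<exists>B. finite B \<and> B \<subseteq> {u. H01V \<Omega> u} \<and> U = {(\<lambda>x. \<Sum>b\<in>B. c b *\<^sub>R b x) | c. True})"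

definition fin_dim_subspaceS :: "(real^2) set \<Rightarrow> (real^2 \<Rightarrow> real) set \<Rightarrow> bool" where
  "fin_dim_subspaceS \<Omega> Q \<longleftrightarrow> Q \<subseteq> {q. H1 \<Omega> q} \<and>
     (\<exists>B. finite B \<and> B \<subseteq> {q. H1 \<Omega> q} \<and> Q = {(\<lambda>x. \<Sum>b\<in>B. c b * b x) | c. True})"

end

theory Submission
  imports Defs "HOL-Library.Function_Algebras" "HOL-Computational_Algebra.Polynomial"
begin

locale ipsp =
  fixes S :: "'a::real_vector set" and ip :: "'a \<Rightarrow> 'a \<Rightarrow> real"
  assumes sub: "subspace S"
  and add_l: "x \<in> S \<Longrightarrow> y \<in> S \<Longrightarrow> z \<in> S \<Longrightarrow> ip (x + y) z = ip x z + ip y z"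
  and scal_l: "x \<in> S \<Longrightarrow> z \<in> S \<Longrightarrow> ip (a *\<^sub>R x) z = a * ip x z"
  and sym: "ip x y = ip y x"
  and pos: "x \<in> S \<Longrightarrow> ip x x \<ge> 0"
begin

lemma S_add[simp]: "x \<in> S \<Longrightarrow> y \<in> S \<Longrightarrow> x + y \<in> S" using sub subspace_add by blast
lemma S_diff[simp]: "x \<in> S \<Longrightarrow> y \<in> S \<Longrightarrow> x - y \<in> S" using sub subspace_diff by blast
lemma S_scal[simp]: "x \<in> S \<Longrightarrow> a *\<^sub>R x \<in> S" using sub subspace_mul by blast
lemma S_neg[simp]: "x \<in> S \<Longrightarrow> - x \<in> S" using sub subspace_neg by blast

lemma add_r: "x \<in> S \<Longrightarrow> y \<in> S \<Longrightarrow> z \<in> S \<Longrightarrow> ip z (x + y) = ip z x + ip z y"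
  by (metis add_l sym)
lemma scal_r: "x \<in> S \<Longrightarrow> z \<in> S \<Longrightarrow> ip z (a *\<^sub>R x) = a * ip z x"
  by (metis scal_l sym)
lemma neg_l: "x \<in> S \<Longrightarrow> z \<in> S \<Longrightarrow> ip (- x) z = - ip x z"
  using scal_l[of x z "-1"] by simp
lemma neg_r: "x \<in> S \<Longrightarrow> z \<in> S \<Longrightarrow> ip z (- x) = - ip z x"
  using neg_l sym by metis
lemma diff_l: "x \<in> S \<Longrightarrow> y \<in> S \<Longrightarrow> z \<in> S \<Longrightarrow> ip (x - y) z = ip x z - ip y z"
  using add_l[of x "-y" z] neg_l by simp
lemma diff_r: "x \<in> S \<Longrightarrow> y \<in> S \<Longrightarrow> z \<in> S \<Longrightarrow> ip z (x - y) = ip z x - ip z y"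
  using diff_l sym by metis

lemma S0[simp]: "0 \<in> S" using sub subspace_0 by blast
lemma zero_l: "z \<in> S \<Longrightarrow> ip 0 z = 0" using scal_l[of 0 z 0] by simp
lemma zero_r: "z \<in> S \<Longrightarrow> ip z 0 = 0" using zero_l sym by metis

lemmas ipx = add_l add_r scal_l scal_r neg_l neg_r diff_l diff_r zero_l zero_r

lemma young: "x \<in> S \<Longrightarrow> y \<in> S \<Longrightarrow> 2 * ip x y \<ge> - ip x x - ip y y"
  using pos[of "x + y"] by (simp add: ipx sym[of y x])

lemma sq2: "x \<in> S \<Longrightarrow> y \<in> S \<Longrightarrow> ip (x + y) (x + y) \<le> 2 * ip x x + 2 * ip y y"
  using pos[of "x - y"] by (simp add: ipx sym[of y x])

lemma sq2d: "x \<in> S \<Longrightarrow> y \<in> S \<Longrightarrow> ip (x - y) (x - y) \<le> 2 * ip x x + 2 * ip y y"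
  using pos[of "x + y"] by (simp add: ipx sym[of y x])

lemma bdf: "a \<in> S \<Longrightarrow> b \<in> S \<Longrightarrow> c \<in> S \<Longrightarrow>
  2 * ip (3 *\<^sub>R a - 4 *\<^sub>R b + c) a = ip a a + ip (2 *\<^sub>R a - b) (2 *\<^sub>R a - b) - ip b b
     - ip (2 *\<^sub>R b - c) (2 *\<^sub>R b - c) + ip (a - 2 *\<^sub>R b + c) (a - 2 *\<^sub>R b + c)"
  by (simp add: ipx sym[of b a] sym[of c a] sym[of c b] algebra_simps)

lemma sq4: "x \<in> S \<Longrightarrow> y \<in> S \<Longrightarrow> z \<in> S \<Longrightarrow> t \<in> S \<Longrightarrow>
  ip (x + y + z + t) (x + y + z + t) \<le> 4 * (ip x x + ip y y + ip z z + ip t t)"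
proof -
  assume h: "x \<in> S" "y \<in> S" "z \<in> S" "t \<in> S"
  have "ip ((x + y) + (z + t)) ((x + y) + (z + t)) \<le> 2 * ip (x+y) (x+y) + 2 * ip (z+t) (z+t)"
    using sq2 h by simp
  moreover have "ip (x+y) (x+y) \<le> 2 * ip x x + 2 * ip y y" using sq2 h by simp
  moreover have "ip (z+t) (z+t) \<le> 2 * ip z z + 2 * ip t t" using sq2 h by simp
  ultimately show ?thesis by (simp add: add.assoc)
qed

definition "nrm x = ip x x"

end

locale scheme = ipsp S ip for S :: "'a::real_vector set" and ip +
  fixes N :: nat and \<tau> \<nu> :: real and u G :: "nat \<Rightarrow> 'a" and A F fn :: "nat \<Rightarrow> real"
  assumes tpos: "\<tau> > 0" and npos: "\<nu> > 0"
  and uS: "\<And>k. k \<le> N \<Longrightarrow> u k \<in> S" and GS: "\<And>k. k \<le> N \<Longrightarrow> G k \<in> S"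
  and H1: "\<And>n. 1 \<le> n \<Longrightarrow> n + 1 \<le> N \<Longrightarrow>
     ip (3 *\<^sub>R u (n+1) - 4 *\<^sub>R u n + u (n-1)) (u (n+1)) / (2*\<tau>) + \<nu> * A (n+1)
     + ip (7 *\<^sub>R G n - 5 *\<^sub>R G (n-1) + G (n-2)) (u (n+1)) / (3*\<tau>) = F (n+1)"
  and H2: "\<And>n j. 1 \<le> n \<Longrightarrow> n + 1 \<le> N \<Longrightarrow> j \<le> N \<Longrightarrow>
     ip (u (n+1)) (G j) = (2/3) * ip (G (n+1) - G n) (G j)"
  and HF: "\<And>k. 2 \<le> k \<Longrightarrow> k \<le> N \<Longrightarrow> \<bar>F k\<bar> \<le> fn k * sqrt (A k) \<and> A k \<ge> 0"
begin

definition "e k = (2/3) *\<^sub>R (G k - G (k-1))"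
definition "w k = u k - e k"
definition "EE k = nrm (w k) + nrm (2 *\<^sub>R w k - w (k-1)) + (4/3) * nrm (G k)"
definition "r n = (if 2 \<le> n then 0 else (-4) *\<^sub>R w n) + (if 3 \<le> n then 0 else w (n-1))"
definition "RR n = nrm (r n)"

lemma eS[simp]: "k \<le> N \<Longrightarrow> e k \<in> S" unfolding e_def using GS by simp
lemma wS[simp]: "k \<le> N \<Longrightarrow> w k \<in> S" unfolding w_def using uS by simp
lemma rS[simp]: "n \<le> N \<Longrightarrow> r n \<in> S" unfolding r_def using sub subspace_0 by auto

lemma orth: "2 \<le> k \<Longrightarrow> k \<le> N \<Longrightarrow> j \<le> N \<Longrightarrow> ip (w k) (G j) = 0"
proof -
  assume h: "2 \<le> k" "k \<le> N" "j \<le> N"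
  have "ip (u (k-1+1)) (G j) = (2/3) * ip (G (k-1+1) - G (k-1)) (G j)"
    using H2[of "k-1" j] h by auto
  then have "ip (u k) (G j) = (2/3) * ip (G k - G (k-1)) (G j)" using h by simp
  then show ?thesis unfolding w_def e_def using h uS GS by (simp add: ipx)
qed

lemma orth_e: "2 \<le> k \<Longrightarrow> k \<le> N \<Longrightarrow> j \<le> N \<Longrightarrow> ip (w k) (e j) = 0"
  unfolding e_def using orth[of k j] orth[of k "j-1"] GS by (simp add: ipx)

lemma step:
  assumes n1: "1 \<le> n" and nN: "n + 1 \<le> N"
  shows "EE (n+1) + 2 * nrm (e (n+1)) + 2 * \<nu> * \<tau> * A (n+1)
         \<le> EE n + 2 * \<tau> * (fn (n+1))^2 / \<nu> + RR n"
proof -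
  have Ss: "u (n+1) \<in> S" "u n \<in> S" "u (n-1) \<in> S" "G (n+1) \<in> S" "G n \<in> S" "G (n-1) \<in> S" "G (n-2) \<in> S"
    "w (n+1) \<in> S" "w n \<in> S" "w (n-1) \<in> S" "e (n+1) \<in> S" "e n \<in> S" "e (n-1) \<in> S"
    using uS GS nN by auto
  have nn: "n - 1 - 1 = n - 2" by simp
  have v1: "ip (7 *\<^sub>R G n - 5 *\<^sub>R G (n-1) + G (n-2)) (u (n+1)) = 3 * ip (G n + 2 *\<^sub>R e n - (1/2) *\<^sub>R e (n-1)) (u (n+1))"
    apply (simp only: e_def nn) using Ss by (simp add: ipx algebra_simps)
  have a0: "ip (3 *\<^sub>R u (n+1) - 4 *\<^sub>R u n + u (n-1)) (u (n+1)) / (2*\<tau>) + \<nu> * A (n+1)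
     + ip (G n + 2 *\<^sub>R e n - (1/2) *\<^sub>R e (n-1)) (u (n+1)) / \<tau> = F (n+1)"
    using H1[OF n1 nN] unfolding v1 by simp
  have a1: "ip (3 *\<^sub>R u (n+1) - 4 *\<^sub>R u n + u (n-1)) (u (n+1)) + 2 * \<nu> * \<tau> * A (n+1)
     + 2 * ip (G n + 2 *\<^sub>R e n - (1/2) *\<^sub>R e (n-1)) (u (n+1)) = 2 * \<tau> * F (n+1)"
  proof -
    have "ip (3 *\<^sub>R u (n+1) - 4 *\<^sub>R u n + u (n-1)) (u (n+1)) + 2 * \<nu> * \<tau> * A (n+1)
     + 2 * ip (G n + 2 *\<^sub>R e n - (1/2) *\<^sub>R e (n-1)) (u (n+1)) = 2 * \<tau> * (ip (3 *\<^sub>R u (n+1) - 4 *\<^sub>R u n + u (n-1)) (u (n+1)) / (2*\<tau>) + \<nu> * A (n+1)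
     + ip (G n + 2 *\<^sub>R e n - (1/2) *\<^sub>R e (n-1)) (u (n+1)) / \<tau>)" using tpos by (simp add: field_simps)
    then show ?thesis using a0 by simp
  qed
  have v2: "ip (3 *\<^sub>R u (n+1) - 4 *\<^sub>R u n + u (n-1)) (u (n+1)) + 2 * ip (2 *\<^sub>R e n - (1/2) *\<^sub>R e (n-1)) (u (n+1))
      = ip (3 *\<^sub>R w (n+1) - 4 *\<^sub>R w n + w (n-1) + 3 *\<^sub>R e (n+1)) (u (n+1))"
    unfolding w_def using Ss by (simp add: ipx algebra_simps)
  have a2: "ip (3 *\<^sub>R w (n+1) - 4 *\<^sub>R w n + w (n-1) + 3 *\<^sub>R e (n+1)) (w (n+1) + e (n+1))
      + 2 * ip (G n) (e (n+1)) + 2 * \<nu> * \<tau> * A (n+1) = 2 * \<tau> * F (n+1)"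
  proof -
    have uu: "u (n+1) = w (n+1) + e (n+1)" unfolding w_def by simp
    have o1: "ip (G n) (w (n+1)) = 0" using orth[of "n+1" n] n1 nN sym by auto
    have "ip (3 *\<^sub>R w (n+1) - 4 *\<^sub>R w n + w (n-1) + 3 *\<^sub>R e (n+1)) (u (n+1))
        + 2 * ip (G n) (u (n+1)) + 2 * \<nu> * \<tau> * A (n+1) = 2 * \<tau> * F (n+1)"
      using a1 v2 Ss by (simp add: ipx)
    then show ?thesis unfolding uu using Ss o1 by (simp add: ipx)
  qed
  have o2: "ip (w (n+1)) (e (n+1)) = 0" using orth_e[of "n+1" "n+1"] n1 nN by auto
  have pe: "2 * ip (G n) (e (n+1)) = (2/3) * (nrm (G (n+1)) - nrm (G n)) - (3/2) * nrm (e (n+1))"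
    unfolding e_def nrm_def using Ss by (simp add: ipx sym[of "G n" "G (Suc n)"] algebra_simps)
  have xr: "ip (- 4 *\<^sub>R w n + w (n-1)) (e (n+1)) = ip (r n) (e (n+1))"
  proof -
    have A1: "2 \<le> n \<Longrightarrow> ip (w n) (e (n+1)) = 0" using orth_e nN by auto
    have A2: "3 \<le> n \<Longrightarrow> ip (w (n-1)) (e (n+1)) = 0" using orth_e[of "n-1" "n+1"] nN by auto
    show ?thesis unfolding r_def using Ss A1 A2 sub subspace_0
      by (cases "2 \<le> n"; cases "3 \<le> n") (auto simp: ipx)
  qed
  have yg: "2 * ip (r n) (e (n+1)) \<ge> - nrm (r n) - nrm (e (n+1))"
    unfolding nrm_def using young nN by simp
  have b: "2 * ip (3 *\<^sub>R w (n+1) - 4 *\<^sub>R w n + w (n-1)) (w (n+1)) =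
     nrm (w (n+1)) + nrm (2 *\<^sub>R w (n+1) - w n) - nrm (w n) - nrm (2 *\<^sub>R w n - w (n-1))
     + nrm (w (n+1) - 2 *\<^sub>R w n + w (n-1))"
    unfolding nrm_def using bdf Ss by simp
  have pz: "nrm (w (n+1) - 2 *\<^sub>R w n + w (n-1)) \<ge> 0" unfolding nrm_def using pos Ss by simp
  have expand: "ip (3 *\<^sub>R w (n+1) - 4 *\<^sub>R w n + w (n-1) + 3 *\<^sub>R e (n+1)) (w (n+1) + e (n+1))
     = ip (3 *\<^sub>R w (n+1) - 4 *\<^sub>R w n + w (n-1)) (w (n+1)) + ip (- 4 *\<^sub>R w n + w (n-1)) (e (n+1))
       + 3 * nrm (e (n+1))"
    unfolding nrm_def using Ss o2 by (simp add: ipx sym[of "e (Suc n)" "w (Suc n)"] algebra_simps)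
  have Fb: "2 * \<tau> * F (n+1) \<le> \<nu> * \<tau> * A (n+1) + \<tau> * (fn (n+1))^2 / \<nu>"
  proof -
    obtain hF: "\<bar>F (n+1)\<bar> \<le> fn (n+1) * sqrt (A (n+1))" "A (n+1) \<ge> 0" using HF[of "n+1"] n1 nN by auto
    define s where "s = sqrt (A (n+1))"
    have s2: "A (n+1) = s^2" using hF(2) s_def by simp
    have "0 \<le> (\<nu> * s - fn (n+1))^2" by simp
    then have "2 * \<nu> * (fn (n+1) * s) \<le> \<nu>^2 * s^2 + (fn (n+1))^2" by (simp add: power2_eq_square algebra_simps)
    then have "2 * (fn (n+1) * s) \<le> \<nu> * s^2 + (fn (n+1))^2 / \<nu>" using npos
      by (simp add: field_simps power2_eq_square)
    moreover have "F (n+1) \<le> fn (n+1) * s" using hF s_def by simp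
    ultimately have "2 * F (n+1) \<le> \<nu> * A (n+1) + (fn (n+1))^2 / \<nu>" using s2 by simp
    then show ?thesis using tpos
      by (metis (no_types, opaque_lifting) distrib_left mult.assoc mult_le_cancel_left_pos mult.left_commute times_divide_eq_right)
  qed
  show ?thesis using a2 expand b pz pe xr yg Fb unfolding EE_def RR_def by (simp add: algebra_simps)
qed


lemma nrm_nonneg: "x \<in> S \<Longrightarrow> nrm x \<ge> 0" unfolding nrm_def using pos by simp
lemma nrm_scal: "x \<in> S \<Longrightarrow> nrm (a *\<^sub>R x) = a^2 * nrm x" unfolding nrm_def by (simp add: ipx power2_eq_square)

lemma RR0: "3 \<le> n \<Longrightarrow> RR n = 0" unfolding RR_def r_def nrm_def using zero_l by simp
lemma RR_nonneg: "n \<le> N \<Longrightarrow> RR n \<ge> 0" unfolding RR_def using nrm_nonneg rS by simp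
lemma EE_nonneg: "k \<le> N \<Longrightarrow> EE k \<ge> 0" unfolding EE_def using nrm_nonneg wS GS
  by (simp add: add_nonneg_nonneg)

lemma accum: "1 \<le> m \<Longrightarrow> m \<le> N \<Longrightarrow>
  EE m + (\<Sum>k=2..m. 2 * nrm (e k) + 2 * \<nu> * \<tau> * A k)
  \<le> EE 1 + (\<Sum>n=1..<m. RR n) + (\<Sum>k=2..m. 2 * \<tau> * (fn k)^2 / \<nu>)"
proof (induction m)
  case 0 then show ?case by simp
next
  case (Suc m)
  show ?case
  proof (cases "m = 0")
    case True then show ?thesis by simp
  next
    case False
    then have m1: "1 \<le> m" by simp
    have st: "EE (m+1) + 2 * nrm (e (m+1)) + 2 * \<nu> * \<tau> * A (m+1)
         \<le> EE m + 2 * \<tau> * (fn (m+1))^2 / \<nu> + RR m" using m1 Suc.prems by (intro step) auto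
    have IH: "EE m + (\<Sum>k=2..m. 2 * nrm (e k) + 2 * \<nu> * \<tau> * A k)
      \<le> EE 1 + (\<Sum>n=1..<m. RR n) + (\<Sum>k=2..m. 2 * \<tau> * (fn k)^2 / \<nu>)"
      using Suc.IH m1 Suc.prems by simp
    have i1: "{2..Suc m} = insert (Suc m) {2..m}" using m1 by auto
    have i2: "{1..<Suc m} = insert m {1..<m}" using m1 by auto
    have "EE (Suc m) + (\<Sum>k=2..Suc m. 2 * nrm (e k) + 2 * \<nu> * \<tau> * A k)
       = EE (Suc m) + 2 * nrm (e (Suc m)) + 2 * \<nu> * \<tau> * A (Suc m) + (\<Sum>k=2..m. 2 * nrm (e k) + 2 * \<nu> * \<tau> * A k)"
      unfolding i1 by simp
    also have "\<dots> \<le> EE m + 2 * \<tau> * (fn (m+1))^2 / \<nu> + RR m + (\<Sum>k=2..m. 2 * nrm (e k) + 2 * \<nu> * \<tau> * A k)"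
      using st by simp
    also have "\<dots> \<le> EE 1 + (\<Sum>n=1..<m. RR n) + (\<Sum>k=2..m. 2 * \<tau> * (fn k)^2 / \<nu>) + 2 * \<tau> * (fn (m+1))^2 / \<nu> + RR m"
      using IH by simp
    also have "\<dots> = EE 1 + (\<Sum>n=1..<Suc m. RR n) + (\<Sum>k=2..Suc m. 2 * \<tau> * (fn k)^2 / \<nu>)"
      unfolding i1 i2 by simp
    finally show ?thesis by simp
  qed
qed

lemma RRsum: "m \<le> N \<Longrightarrow> 2 \<le> N \<Longrightarrow> (\<Sum>n=1..<m. RR n) \<le> RR 1 + RR 2"
proof -
  assume h: "m \<le> N" "2 \<le> N"
  have "(\<Sum>n=1..<m. RR n) = (\<Sum>n\<in>{1..<m}\<inter>{1,2}. RR n)"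
  proof (rule sum.mono_neutral_right)
    show "\<forall>i\<in>{1..<m} - {1..<m} \<inter> {1, 2}. RR i = 0"
    proof
      fix i assume "i \<in> {1..<m} - {1..<m} \<inter> {1, 2}"
      then have "3 \<le> i" by auto
      then show "RR i = 0" by (rule RR0)
    qed
  qed auto
  also have "\<dots> \<le> (\<Sum>n\<in>{1,2}. RR n)"
    by (rule sum_mono2) (use h RR_nonneg in auto)
  finally show ?thesis by simp
qed

lemma init_bound: "2 \<le> N \<Longrightarrow> EE 1 + RR 1 + RR 2 \<le> 90 * (nrm (u 0) + nrm (u 1) + nrm (G 0) + nrm (G 1))"
proof -
  assume N2: "2 \<le> N"
  have Ss: "u 0 \<in> S" "u 1 \<in> S" "G 0 \<in> S" "G 1 \<in> S" using uS GS N2 by auto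
  let ?I = "nrm (u 0) + nrm (u 1) + nrm (G 0) + nrm (G 1)"
  have nn: "nrm (u 0) \<ge> 0" "nrm (u 1) \<ge> 0" "nrm (G 0) \<ge> 0" "nrm (G 1) \<ge> 0" using Ss nrm_nonneg by auto
  have gen: "nrm (a *\<^sub>R u 0 + b *\<^sub>R u 1 + c *\<^sub>R G 1 + d *\<^sub>R G 0) \<le> 4 * (a^2 * nrm (u 0) + b^2 * nrm (u 1) + c^2 * nrm (G 1) + d^2 * nrm (G 0))" for a b c d
    using sq4[of "a *\<^sub>R u 0" "b *\<^sub>R u 1" "c *\<^sub>R G 1" "d *\<^sub>R G 0"] Ss unfolding nrm_def[symmetric] by (simp add: nrm_scal)
  have e1: "nrm (w 1) = nrm (0 *\<^sub>R u 0 + 1 *\<^sub>R u 1 + (-2/3) *\<^sub>R G 1 + (2/3) *\<^sub>R G 0)"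
    unfolding w_def e_def nrm_def using Ss by (simp add: ipx algebra_simps)
  have e2: "nrm (2 *\<^sub>R w 1 - w 0) = nrm ((-1) *\<^sub>R u 0 + 2 *\<^sub>R u 1 + (-4/3) *\<^sub>R G 1 + (4/3) *\<^sub>R G 0)"
    unfolding w_def e_def nrm_def using Ss by (simp add: ipx algebra_simps)
  have e3: "RR 1 = nrm (1 *\<^sub>R u 0 + (-4) *\<^sub>R u 1 + (8/3) *\<^sub>R G 1 + (-8/3) *\<^sub>R G 0)"
    unfolding RR_def r_def w_def e_def nrm_def using Ss by (simp add: ipx algebra_simps)
  have e4: "RR 2 = nrm (w 1)" unfolding RR_def r_def by simp
  have b1: "nrm (w 1) \<le> 4 * ?I" using gen[of 0 1 "-2/3" "2/3"] e1 nn by (simp add: power2_eq_square)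
  have b2: "nrm (2 *\<^sub>R w 1 - w 0) \<le> 16 * ?I" using gen[of "-1" 2 "-4/3" "4/3"] e2 nn by (simp add: power2_eq_square)
  have b3: "RR 1 \<le> 64 * ?I" using gen[of 1 "-4" "8/3" "-8/3"] e3 nn by (simp add: power2_eq_square)
  show ?thesis using b1 b2 b3 e4 nn unfolding EE_def by simp
qed


lemma final:
  assumes n2: "2 \<le> n" and nN: "n \<le> N"
  shows "nrm (u n) + nrm (G n) + nrm (G (n-1) - G (n-2))
     + (\<Sum>k=2..N. \<nu> * \<tau> * A k + nrm (G (k-1) - G (k-2)))
     \<le> 700 * (nrm (u 0) + nrm (u 1) + nrm (G 0) + nrm (G 1) + (1/\<nu>) * (\<Sum>k=2..N. \<tau> * (fn k)^2))"
proof -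
  have N2: "2 \<le> N" using n2 nN by simp
  let ?I = "nrm (u 0) + nrm (u 1) + nrm (G 0) + nrm (G 1)"
  let ?Fs = "\<Sum>k=2..N. \<tau> * (fn k)^2"
  define Z where "Z = EE 1 + RR 1 + RR 2 + (\<Sum>k=2..N. 2 * \<tau> * (fn k)^2 / \<nu>)"
  define SN where "SN = (\<Sum>k=2..N. 2 * nrm (e k) + 2 * \<nu> * \<tau> * A k)"
  have Ss0: "u 0 \<in> S" "u 1 \<in> S" "G 0 \<in> S" "G 1 \<in> S" using uS GS N2 by auto
  have Inn: "?I \<ge> 0" using nrm_nonneg Ss0 by (simp add: add_nonneg_nonneg)
  have Fsnn: "?Fs \<ge> 0" using tpos by (simp add: sum_nonneg)
  have Zs: "(\<Sum>k=2..N. 2 * \<tau> * (fn k)^2 / \<nu>) = (2/\<nu>) * ?Fs"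
    by (simp add: sum_distrib_left mult.assoc)
  have Zb: "Z \<le> 90 * ?I + (2/\<nu>) * ?Fs" unfolding Z_def Zs using init_bound N2 by simp
  have termnn: "\<And>k. 2 \<le> k \<Longrightarrow> k \<le> N \<Longrightarrow> 2 * nrm (e k) + 2 * \<nu> * \<tau> * A k \<ge> 0"
    using nrm_nonneg eS HF npos tpos by (simp add: add_nonneg_nonneg)
  have psum: "\<And>m. 2 \<le> m \<Longrightarrow> m \<le> N \<Longrightarrow> EE m + (\<Sum>k=2..m. 2 * nrm (e k) + 2 * \<nu> * \<tau> * A k) \<le> Z"
  proof -
    fix m assume m: "2 \<le> m" "m \<le> N"
    have "(\<Sum>k=2..m. 2 * \<tau> * (fn k)^2 / \<nu>) \<le> (\<Sum>k=2..N. 2 * \<tau> * (fn k)^2 / \<nu>)"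
      by (rule sum_mono2) (use m npos tpos in auto)
    then show "EE m + (\<Sum>k=2..m. 2 * nrm (e k) + 2 * \<nu> * \<tau> * A k) \<le> Z"
      using accum[of m] RRsum[of m] m N2 unfolding Z_def by simp
  qed
  have SNb: "SN \<le> Z" using psum[of N] EE_nonneg[of N] N2 unfolding SN_def by simp
  have SNnn: "\<And>m. 2 \<le> m \<Longrightarrow> m \<le> N \<Longrightarrow> (\<Sum>k=2..m. 2 * nrm (e k) + 2 * \<nu> * \<tau> * A k) \<ge> 0"
    using termnn by (intro sum_nonneg) auto
  have SN0: "SN \<ge> 0" using SNnn[of N] N2 unfolding SN_def by simp
  have EEb: "EE n \<le> Z" using psum[of n] SNnn[of n] n2 nN by simp
  have enb: "\<And>k. 2 \<le> k \<Longrightarrow> k \<le> N \<Longrightarrow> 2 * nrm (e k) \<le> SN"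
  proof -
    fix k assume k: "2 \<le> k" "k \<le> N"
    have "2 * nrm (e k) + 2 * \<nu> * \<tau> * A k \<le> SN" unfolding SN_def
      by (rule member_le_sum) (use k termnn in auto)
    moreover have "A k \<ge> 0" using HF k by simp
    ultimately show "2 * nrm (e k) \<le> SN" using npos tpos by (smt (verit) mult_nonneg_nonneg)
  qed
  have Ab: "(\<Sum>k=2..N. \<nu> * \<tau> * A k) \<le> SN / 2"
  proof -
    have "(\<Sum>k=2..N. \<nu> * \<tau> * A k) \<le> (\<Sum>k=2..N. (2 * nrm (e k) + 2 * \<nu> * \<tau> * A k) / 2)"
      by (rule sum_mono) (use nrm_nonneg eS in auto)
    then show ?thesis unfolding SN_def by (simp add: sum_divide_distrib)
  qed
  have wE: "nrm (w n) \<le> EE n" "nrm (G n) \<le> (3/4) * EE n" unfolding EE_def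
    using nrm_nonneg wS GS nN by (simp_all add: add_nonneg_nonneg)
  have un: "nrm (u n) \<le> 2 * nrm (w n) + 2 * nrm (e n)"
  proof -
    have "u n = w n + e n" unfolding w_def by simp
    then show ?thesis using sq2[of "w n" "e n"] nN unfolding nrm_def by simp
  qed
  have ub: "nrm (u n) \<le> 3 * Z" using un wE enb[of n] n2 nN EEb SNb by simp
  have Gd: "\<And>k. 3 \<le> k \<Longrightarrow> k \<le> N \<Longrightarrow> nrm (G (k-1) - G (k-2)) = (9/4) * nrm (e (k-1))"
  proof -
    fix k assume k: "3 \<le> k" "k \<le> N"
    have kk: "k - 1 - 1 = k - 2" by simp
    have "nrm (e (k-1)) = (2/3)^2 * nrm (G (k-1) - G (k-2))"
      unfolding e_def kk using nrm_scal GS k by simp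
    then show "nrm (G (k-1) - G (k-2)) = (9/4) * nrm (e (k-1))" by (simp add: power2_eq_square)
  qed
  have G10: "nrm (G 1 - G 0) \<le> 2 * nrm (G 1) + 2 * nrm (G 0)" using sq2d Ss0 unfolding nrm_def by simp
  have G0nn: "nrm (G 1) \<ge> 0" "nrm (G 0) \<ge> 0" using nrm_nonneg Ss0 by auto
  have dn: "nrm (G (n-1) - G (n-2)) \<le> 2 * ?I + (9/8) * SN"
  proof (cases "n = 2")
    case True then show ?thesis using G10 nrm_nonneg[OF Ss0(1)] nrm_nonneg[OF Ss0(2)] SN0 by simp
  next
    case False
    then have "3 \<le> n" using n2 by simp
    moreover have "2 * nrm (e (n-1)) \<le> SN" using enb[of "n-1"] nN \<open>3 \<le> n\<close> by simp
    ultimately show ?thesis using Gd[of n] nN Inn by simp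
  qed
  have sumd: "(\<Sum>k=2..N. nrm (G (k-1) - G (k-2))) \<le> 2 * ?I + (9/8) * SN"
  proof -
    have "(\<Sum>k=2..N. nrm (G (k-1) - G (k-2))) = nrm (G 1 - G 0) + (\<Sum>k=Suc 2..N. nrm (G (k-1) - G (k-2)))"
      using N2 by (simp add: sum.atLeast_Suc_atMost)
    also have "(\<Sum>k=Suc 2..N. nrm (G (k-1) - G (k-2))) = (\<Sum>k=Suc 2..N. (9/4) * nrm (e (k-1)))"
      by (rule sum.cong) (use Gd in auto)
    also have "\<dots> = (9/4) * (\<Sum>k=Suc 2..Suc (N-1). nrm (e (k-1)))" using N2 by (simp add: sum_distrib_left)
    also have "(\<Sum>k=Suc 2..Suc (N-1). nrm (e (k-1))) = (\<Sum>k=2..N-1. nrm (e k))"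
      by (subst sum.shift_bounds_cl_Suc_ivl) simp
    also have "\<dots> \<le> (\<Sum>k=2..N. nrm (e k))"
      by (rule sum_mono2) (use nrm_nonneg eS in auto)
    also have "\<dots> \<le> SN / 2"
    proof -
      have "(\<Sum>k=2..N. nrm (e k)) \<le> (\<Sum>k=2..N. (2 * nrm (e k) + 2 * \<nu> * \<tau> * A k) / 2)"
        by (rule sum_mono) (use HF npos tpos in auto)
      then show ?thesis unfolding SN_def by (simp add: sum_divide_distrib)
    qed
    finally show ?thesis using G10 nrm_nonneg[OF Ss0(1)] nrm_nonneg[OF Ss0(2)] by simp
  qed
  have "nrm (u n) + nrm (G n) + nrm (G (n-1) - G (n-2))
     + (\<Sum>k=2..N. \<nu> * \<tau> * A k + nrm (G (k-1) - G (k-2)))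
     \<le> 3 * Z + (3/4) * Z + (2 * ?I + (9/8) * SN) + (SN/2 + (2 * ?I + (9/8) * SN))"
    using ub wE EEb dn Ab sumd by (simp add: sum.distrib)
  also have "\<dots> \<le> 7 * Z + 4 * ?I" using SNb SN0 by simp
  also have "\<dots> \<le> 700 * (?I + (1/\<nu>) * ?Fs)"
  proof -
    have q0: "?Fs / \<nu> \<ge> 0" using Fsnn npos by simp
    have "Z \<le> 90 * ?I + 2 * (?Fs / \<nu>)" using Zb by simp
    then show ?thesis using q0 Inn by simp
  qed
  finally show ?thesis by simp
qed

end

lemma L2_meas: "L2 \<Omega> f \<Longrightarrow> (\<lambda>x. indicator \<Omega> x * f x) \<in> borel_measurable lborel"
  unfolding L2_def set_borel_measurable_def by simp

lemma L2_sq_int: "L2 \<Omega> f \<Longrightarrow> integrable lborel (\<lambda>x. (indicator \<Omega> x * f x)^2)"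
proof -
  assume h: "L2 \<Omega> f"
  have "integrable lborel (\<lambda>x. indicator \<Omega> x *\<^sub>R (f x)^2)" using h unfolding L2_def set_integrable_def by simp
  moreover have "(\<lambda>x. indicator \<Omega> x *\<^sub>R (f x)^2) = (\<lambda>x. (indicator \<Omega> x * f x)^2)"
    by (auto simp: indicator_def fun_eq_iff power2_eq_square)
  ultimately show ?thesis by simp
qed

lemma L2I: "(\<lambda>x. indicator \<Omega> x * f x) \<in> borel_measurable lborel \<Longrightarrow>
   integrable lborel (\<lambda>x. (indicator \<Omega> x * f x)^2) \<Longrightarrow> L2 \<Omega> f"
proof -
  assume a: "(\<lambda>x. indicator \<Omega> x * f x) \<in> borel_measurable lborel" "integrable lborel (\<lambda>x. (indicator \<Omega> x * f x)^2)"
  have "(\<lambda>x. indicator \<Omega> x *\<^sub>R (f x)^2) = (\<lambda>x. (indicator \<Omega> x * f x)^2)"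
    by (auto simp: indicator_def fun_eq_iff power2_eq_square)
  then show ?thesis using a unfolding L2_def set_integrable_def set_borel_measurable_def by simp
qed

lemma L2_prod_int: "L2 \<Omega> f \<Longrightarrow> L2 \<Omega> g \<Longrightarrow> integrable lborel (\<lambda>x. indicator \<Omega> x * (f x * g x))"
proof -
  assume f: "L2 \<Omega> f" and g: "L2 \<Omega> g"
  have eq: "(\<lambda>x. indicator \<Omega> x * (f x * g x)) = (\<lambda>x. (indicator \<Omega> x * f x) * (indicator \<Omega> x * g x))"
    by (auto simp: indicator_def fun_eq_iff)
  show ?thesis unfolding eq
  proof (rule Bochner_Integration.integrable_bound)
    show "integrable lborel (\<lambda>x. (indicator \<Omega> x * f x)^2 + (indicator \<Omega> x * g x)^2)"
      using L2_sq_int[OF f] L2_sq_int[OF g] by simp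
    show "(\<lambda>x. (indicator \<Omega> x * f x) * (indicator \<Omega> x * g x)) \<in> borel_measurable lborel"
      using L2_meas[OF f] L2_meas[OF g] by simp
    show "AE x in lborel. norm ((indicator \<Omega> x * f x) * (indicator \<Omega> x * g x))
        \<le> norm ((indicator \<Omega> x * f x)^2 + (indicator \<Omega> x * g x)^2)"
    proof (rule AE_I2)
      fix x
      have "\<bar>a * b\<bar> \<le> a^2 + b^2" for a b :: real
      proof -
        have "2 * \<bar>a\<bar> * \<bar>b\<bar> \<le> \<bar>a\<bar>^2 + \<bar>b\<bar>^2" by (rule sum_squares_bound)
        then have "2 * \<bar>a\<bar> * \<bar>b\<bar> \<le> a^2 + b^2" by simp
        moreover have "\<bar>a\<bar> * \<bar>b\<bar> \<ge> 0" by simp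
        moreover have "0 \<le> a^2 + b^2" by simp
        ultimately have "\<bar>a\<bar> * \<bar>b\<bar> \<le> a^2 + b^2" by linarith
        then show ?thesis by (simp add: abs_mult)
      qed
      then show "norm ((indicator \<Omega> x * f x) * (indicator \<Omega> x * g x))
        \<le> norm ((indicator \<Omega> x * f x)^2 + (indicator \<Omega> x * g x)^2)" by simp
    qed
  qed
qed

lemma L2_set_int: "L2 \<Omega> f \<Longrightarrow> L2 \<Omega> g \<Longrightarrow> set_integrable lborel \<Omega> (\<lambda>x. f x * g x)"
  unfolding set_integrable_def using L2_prod_int by simp

lemma L2_add: "L2 \<Omega> f \<Longrightarrow> L2 \<Omega> g \<Longrightarrow> L2 \<Omega> (\<lambda>x. f x + g x)"
proof (rule L2I)
  assume f: "L2 \<Omega> f" and g: "L2 \<Omega> g"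
  have eq: "(\<lambda>x. indicator \<Omega> x * (f x + g x)) = (\<lambda>x. indicator \<Omega> x * f x + indicator \<Omega> x * g x)"
    by (auto simp: fun_eq_iff algebra_simps)
  show "(\<lambda>x. indicator \<Omega> x * (f x + g x)) \<in> borel_measurable lborel"
    unfolding eq using L2_meas[OF f] L2_meas[OF g] by simp
  have eq2: "(\<lambda>x. (indicator \<Omega> x * (f x + g x))^2) = (\<lambda>x. (indicator \<Omega> x * f x)^2 + (indicator \<Omega> x * g x)^2
     + 2 * (indicator \<Omega> x * (f x * g x)))"
    by (auto simp: fun_eq_iff indicator_def power2_eq_square algebra_simps)
  show "integrable lborel (\<lambda>x. (indicator \<Omega> x * (f x + g x))^2)"
    unfolding eq2 using L2_sq_int[OF f] L2_sq_int[OF g] L2_prod_int[OF f g] by simp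
qed

lemma L2_scale: "L2 \<Omega> f \<Longrightarrow> L2 \<Omega> (\<lambda>x. c * f x)"
proof (rule L2I)
  assume f: "L2 \<Omega> f"
  show "(\<lambda>x. indicator \<Omega> x * (c * f x)) \<in> borel_measurable lborel"
    using L2_meas[OF f] borel_measurable_times[OF borel_measurable_const[of c] L2_meas[OF f]]
    by (simp add: mult.left_commute)
  have eq2: "(\<lambda>x. (indicator \<Omega> x * (c * f x))^2) = (\<lambda>x. c^2 * (indicator \<Omega> x * f x)^2)"
    by (auto simp: fun_eq_iff power2_eq_square algebra_simps)
  show "integrable lborel (\<lambda>x. (indicator \<Omega> x * (c * f x))^2)"
    unfolding eq2 using L2_sq_int[OF f] by simp
qed

lemma L2_neg: "L2 \<Omega> f \<Longrightarrow> L2 \<Omega> (\<lambda>x. - f x)" using L2_scale[of \<Omega> f "-1"] by simp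
lemma L2_diff: "L2 \<Omega> f \<Longrightarrow> L2 \<Omega> g \<Longrightarrow> L2 \<Omega> (\<lambda>x. f x - g x)"
  using L2_add[of \<Omega> f "\<lambda>x. - g x"] L2_neg by simp
lemma L2_zero: "L2 \<Omega> (\<lambda>x. 0)" by (rule L2I) auto
lemma L2_sum: "finite I \<Longrightarrow> (\<And>i. i \<in> I \<Longrightarrow> L2 \<Omega> (f i)) \<Longrightarrow> L2 \<Omega> (\<lambda>x. \<Sum>i\<in>I. f i x)"
  by (induction I rule: finite_induct) (auto intro: L2_add L2_zero)

lemma ipS_lin: "L2 \<Omega> f \<Longrightarrow> L2 \<Omega> g \<Longrightarrow> L2 \<Omega> h \<Longrightarrow>
   ipS \<Omega> (\<lambda>x. a * f x + b * g x) h = a * ipS \<Omega> f h + b * ipS \<Omega> g h"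
proof -
  assume f: "L2 \<Omega> f" and g: "L2 \<Omega> g" and h: "L2 \<Omega> h"
  have "(LINT x:\<Omega>|lborel. (a * f x + b * g x) * h x) = (LINT x:\<Omega>|lborel. a * (f x * h x) + b * (g x * h x))"
    by (simp add: algebra_simps)
  also have "\<dots> = (LINT x:\<Omega>|lborel. a * (f x * h x)) + (LINT x:\<Omega>|lborel. b * (g x * h x))"
    by (rule set_integral_add) (use L2_set_int[OF f h] L2_set_int[OF g h] in auto)
  also have "\<dots> = a * ipS \<Omega> f h + b * ipS \<Omega> g h" unfolding ipS_def by simp
  finally show ?thesis unfolding ipS_def .
qed

lemma ipS_sym: "ipS \<Omega> f g = ipS \<Omega> g f" unfolding ipS_def by (simp add: mult.commute)

lemma ipS_nonneg: "ipS \<Omega> f f \<ge> 0"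
  unfolding ipS_def set_lebesgue_integral_def by (rule integral_nonneg_AE) (auto simp: indicator_def)

lemma ipS_sum_left: "finite I \<Longrightarrow> (\<And>i. i \<in> I \<Longrightarrow> L2 \<Omega> (f i)) \<Longrightarrow> L2 \<Omega> h \<Longrightarrow>
   ipS \<Omega> (\<lambda>x. \<Sum>i\<in>I. f i x) h = (\<Sum>i\<in>I. ipS \<Omega> (f i) h)"
proof (induction I rule: finite_induct)
  case empty then show ?case unfolding ipS_def by simp
next
  case (insert i I)
  have "ipS \<Omega> (\<lambda>x. \<Sum>i\<in>insert i I. f i x) h = ipS \<Omega> (\<lambda>x. 1 * f i x + 1 * (\<Sum>i\<in>I. f i x)) h"
    using insert by simp
  also have "\<dots> = ipS \<Omega> (f i) h + ipS \<Omega> (\<lambda>x. \<Sum>i\<in>I. f i x) h"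
    using insert by (subst ipS_lin) (auto intro: L2_sum)
  finally show ?case using insert by simp
qed

definition sm1 :: "(real \<Rightarrow> real) \<Rightarrow> bool" where
  "sm1 g \<longleftrightarrow> (\<exists>D. D 0 = g \<and> (\<forall>k x. (D k has_real_derivative D (Suc k) x) (at x)))"

lemma sm1_deriv: "sm1 g \<Longrightarrow> \<exists>g'. sm1 g' \<and> (\<forall>x. (g has_real_derivative g' x) (at x))"
proof -
  assume "sm1 g"
  then obtain D where D: "D 0 = g" "\<And>k x. (D k has_real_derivative D (Suc k) x) (at x)" unfolding sm1_def by blast
  have "sm1 (D 1)" unfolding sm1_def by (rule exI[of _ "\<lambda>k. D (Suc k)"]) (use D in auto)
  then show ?thesis using D(2)[of 0] D(1) by auto
qed

lemma sm1_const: "sm1 (\<lambda>t. c)"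
  unfolding sm1_def by (rule exI[of _ "\<lambda>k. if k = 0 then (\<lambda>t. c) else (\<lambda>t. 0)"]) auto

lemma sm1_affine:
  assumes "sm1 g" shows "sm1 (\<lambda>t. g (m * t + c))"
proof -
  obtain D where D: "D 0 = g" "\<And>k x. (D k has_real_derivative D (Suc k) x) (at x)" using assms unfolding sm1_def by blast
  show ?thesis unfolding sm1_def
  proof (intro exI[of _ "\<lambda>k t. m^k * D k (m * t + c)"] conjI allI)
    show "(\<lambda>t. m ^ 0 * D 0 (m * t + c)) = (\<lambda>t. g (m * t + c))" using D by simp
    fix k x
    have "((\<lambda>t. D k (m * t + c)) has_real_derivative D (Suc k) (m * x + c) * m) (at x)"
      by (rule DERIV_chain2[OF D(2)]) (auto intro!: derivative_eq_intros)
    then show "((\<lambda>t. m ^ k * D k (m * t + c)) has_real_derivative m ^ Suc k * D (Suc k) (m * x + c)) (at x)"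
      using DERIV_cmult[where c="m^k"] by (fastforce simp: algebra_simps)
  qed
qed

definition eb :: "real \<Rightarrow> real" where "eb t = (if t > 0 then exp (- 1 / t) else 0)"

fun Pk :: "nat \<Rightarrow> real poly" where
  "Pk 0 = 1" | "Pk (Suc k) = [:0,0,1:] * (Pk k - pderiv (Pk k))"

definition ED :: "nat \<Rightarrow> real \<Rightarrow> real" where
  "ED k t = (if t > 0 then poly (Pk k) (1 / t) * exp (- 1 / t) else 0)"

lemma polyexp: "((\<lambda>y. poly q y * exp (- y)) \<longlongrightarrow> 0) at_top" for q :: "real poly"
proof -
  have "((\<lambda>y. \<Sum>i\<le>degree q. coeff q i * (y ^ i / exp y)) \<longlongrightarrow> (\<Sum>i\<le>degree q. coeff q i * 0)) at_top"
    by (intro tendsto_sum tendsto_mult tendsto_const tendsto_power_div_exp_0)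
  moreover have "(\<lambda>y. \<Sum>i\<le>degree q. coeff q i * (y ^ i / exp y)) = (\<lambda>y. poly q y * exp (- y))"
    by (simp add: fun_eq_iff poly_altdef sum_distrib_right exp_minus divide_inverse mult.assoc)
  ultimately show ?thesis by simp
qed

lemma ED_deriv: "(ED k has_real_derivative ED (Suc k) x) (at x)"
proof -
  consider "x > 0" | "x < 0" | "x = 0" by linarith
  then show ?thesis
  proof cases
    case 1
    let ?p = "Pk k"
    have d: "((\<lambda>t. poly ?p (1 / t) * exp (- 1 / t)) has_real_derivative
       poly (pderiv ?p) (1/x) * (- 1 / x^2) * exp (- 1 / x) + poly ?p (1/x) * (exp (- 1 / x) * (1 / x^2))) (at x)"
      using 1 by (auto intro!: derivative_eq_intros DERIV_chain2[OF poly_DERIV] simp: power2_eq_square field_simps)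
    have eqv: "poly (pderiv ?p) (1/x) * (- 1 / x^2) * exp (- 1 / x) + poly ?p (1/x) * (exp (- 1 / x) * (1 / x^2))
        = ED (Suc k) x"
      using 1 by (simp add: ED_def power2_eq_square field_simps)
    show ?thesis
      by (rule has_field_derivative_transform_within_open[OF d[unfolded eqv], of "{0<..}"])
         (use 1 in \<open>auto simp: ED_def\<close>)
  next
    case 2
    have "((\<lambda>t. 0) has_real_derivative 0) (at x)" by simp
    then have "(ED k has_real_derivative 0) (at x)"
      by (rule has_field_derivative_transform_within_open[of _ _ _ "{..<0}"]) (use 2 in \<open>auto simp: ED_def\<close>)
    moreover have "ED (Suc k) x = 0" using 2 by (simp add: ED_def)
    ultimately show ?thesis by simp
  next
    case 3
    have "((\<lambda>y. (ED k y - ED k 0) / (y - 0)) \<longlongrightarrow> 0) (at 0)"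
    proof (rule filterlim_split_at)
      show "((\<lambda>y. (ED k y - ED k 0) / (y - 0)) \<longlongrightarrow> 0) (at_left 0)"
        by (rule tendsto_eventually) (auto simp: ED_def eventually_at_left_field intro: exI[of _ "-1"])
      have "((\<lambda>y. poly ([:0,1:] * Pk k) y * exp (- y)) \<longlongrightarrow> 0) at_top" by (rule polyexp)
      then have "((\<lambda>y. (ED k (inverse y) - ED k 0) / (inverse y - 0)) \<longlongrightarrow> 0) at_top"
      proof (rule Lim_transform_eventually)
        show "\<forall>\<^sub>F y in at_top. poly ([:0,1:] * Pk k) y * exp (- y) = (ED k (inverse y) - ED k 0) / (inverse y - 0)"
          using eventually_gt_at_top[of 0] by eventually_elim (auto simp: ED_def field_simps)
      qed
      then show "((\<lambda>y. (ED k y - ED k 0) / (y - 0)) \<longlongrightarrow> 0) (at_right 0)"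
        unfolding filterlim_at_right_to_top .
    qed
    then have "(ED k has_real_derivative 0) (at 0)" unfolding has_field_derivative_iff .
    then show ?thesis using 3 by (simp add: ED_def)
  qed
qed

lemma sm1_eb: "sm1 eb"
  unfolding sm1_def
proof (intro exI[of _ ED] conjI allI ED_deriv)
  show "ED 0 = eb" by (auto simp: fun_eq_iff ED_def eb_def)
qed

lemma eb_nonneg: "eb t \<ge> 0" by (simp add: eb_def)
lemma eb_le1: "eb t \<le> 1" by (simp add: eb_def)
lemma eb_pos: "eb t > 0 \<longleftrightarrow> t > 0" by (simp add: eb_def)
lemma eb_lim: "t > 0 \<Longrightarrow> ((\<lambda>m. eb (real (Suc m) * t)) \<longlongrightarrow> 1) sequentially"
proof -
  assume t: "t > 0"
  have "((\<lambda>m. exp (- (1 / t) * inverse (real (Suc m)))) \<longlongrightarrow> exp (- (1/t) * 0)) sequentially"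
    by (intro tendsto_intros LIMSEQ_inverse_real_of_nat)
  moreover have "eb (real (Suc m) * t) = exp (- (1 / t) * inverse (real (Suc m)))" for m
    using t by (simp add: eb_def field_simps add_pos_nonneg)
  ultimately show ?thesis by simp
qed

lemma axis_comp: "(x + t *\<^sub>R axis i 1) $ j = x $ j + (if j = i then t else 0)"
  by (simp add: axis_def)

inductive Qc :: "(real^2 \<Rightarrow> real) \<Rightarrow> bool" where
  coord: "sm1 g \<Longrightarrow> Qc (\<lambda>x. g (x $ j))"
| const: "Qc (\<lambda>x. c)"
| add: "Qc f \<Longrightarrow> Qc g \<Longrightarrow> Qc (\<lambda>x. f x + g x)"
| mult: "Qc f \<Longrightarrow> Qc g \<Longrightarrow> Qc (\<lambda>x. f x * g x)"

lemma sm1_cont: "sm1 g \<Longrightarrow> continuous_on UNIV g"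
proof -
  assume "sm1 g"
  then obtain g' where "\<And>x. (g has_real_derivative g' x) (at x)" using sm1_deriv by blast
  then show ?thesis by (meson DERIV_isCont continuous_at_imp_continuous_on)
qed

lemma Qc_cont: "Qc f \<Longrightarrow> continuous_on UNIV f"
proof (induction rule: Qc.induct)
  case (coord g j)
  have "continuous_on UNIV (\<lambda>x::real^2. x $ j)" by (intro continuous_intros)
  then have "continuous_on UNIV (g \<circ> (\<lambda>x::real^2. x $ j))"
    by (rule continuous_on_compose) (use sm1_cont[OF coord] continuous_on_subset in blast)
  then show ?case by (simp add: o_def)
qed (auto intro: continuous_intros)

lemma Qc_line: "Qc f \<Longrightarrow> \<exists>f'. Qc f' \<and> (\<forall>x. ((\<lambda>t. f (x + t *\<^sub>R axis i 1)) has_real_derivative f' x) (at 0))"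
proof (induction rule: Qc.induct)
  case (coord g j)
  obtain g' where g': "sm1 g'" "\<And>x. (g has_real_derivative g' x) (at x)" using sm1_deriv[OF coord] by blast
  show ?case
  proof (cases "j = i")
    case True
    have "((\<lambda>t. g (x $ j + t)) has_real_derivative g' (x $ j)) (at 0)" for x
    proof -
      have d1: "((\<lambda>t. x $ j + t) has_real_derivative 1) (at 0)" by (auto intro!: derivative_eq_intros)
      show ?thesis using DERIV_chain2[OF g'(2) d1] by simp
    qed
    then show ?thesis using True g'(1) by (intro exI[of _ "\<lambda>x. g' (x $ j)"]) (auto simp: axis_comp intro: Qc.coord)
  next
    case False
    then show ?thesis by (intro exI[of _ "\<lambda>x. 0"]) (auto simp: axis_def intro: Qc.const)
  qed
next
  case (const c)
  then show ?case by (intro exI[of _ "\<lambda>x. 0"]) (auto intro: Qc.const)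
next
  case (add f g)
  then obtain f' g' where "Qc f'" "Qc g'" "\<And>x. ((\<lambda>t. f (x + t *\<^sub>R axis i 1)) has_real_derivative f' x) (at 0)"
    "\<And>x. ((\<lambda>t. g (x + t *\<^sub>R axis i 1)) has_real_derivative g' x) (at 0)" by blast
  then show ?case by (intro exI[of _ "\<lambda>x. f' x + g' x"]) (auto intro: Qc.add DERIV_add)
next
  case (mult f g)
  then obtain f' g' where h: "Qc f'" "Qc g'" "\<And>x. ((\<lambda>t. f (x + t *\<^sub>R axis i 1)) has_real_derivative f' x) (at 0)"
    "\<And>x. ((\<lambda>t. g (x + t *\<^sub>R axis i 1)) has_real_derivative g' x) (at 0)" by blast
  have "((\<lambda>t. f (x + t *\<^sub>R axis i 1) * g (x + t *\<^sub>R axis i 1)) has_real_derivative f' x * g x + f x * g' x) (at 0)" for x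
    using DERIV_mult[OF h(3)[of x] h(4)[of x]] by (simp add: mult.commute)
  then show ?case using h mult.hyps by (intro exI[of _ "\<lambda>x. f' x * g x + f x * g' x"]) (auto intro: Qc.add Qc.mult)
qed

lemma Qc_Ck: "Qc f \<Longrightarrow> Ck k f"
proof (induction k arbitrary: f)
  case 0 then show ?case using Qc_cont by simp
next
  case (Suc k)
  have "(\<lambda>t. f (x + t *\<^sub>R axis i 1)) differentiable (at 0)" for i x
    using Qc_line[OF Suc.prems, of i] real_differentiable_def by blast
  moreover have "Ck k (pd i f)" for i
  proof -
    obtain f' where f': "Qc f'" "\<And>x. ((\<lambda>t. f (x + t *\<^sub>R axis i 1)) has_real_derivative f' x) (at 0)"
      using Qc_line[OF Suc.prems, of i] by blast
    have "pd i f = f'" unfolding pd_def using f'(2) by (auto simp: fun_eq_iff DERIV_imp_deriv)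
    then show ?thesis using Suc.IH f'(1) by simp
  qed
  ultimately show ?case using Qc_cont[OF Suc.prems] by simp
qed

lemma Qc_Cinf: "Qc f \<Longrightarrow> C_inf f" unfolding C_inf_def using Qc_Ck by blast

definition bx :: "real \<Rightarrow> real^2 \<Rightarrow> real^2 \<Rightarrow> real^2 \<Rightarrow> real" where
  "bx m a b x = eb (m * (x$1 - a$1)) * eb (m * (b$1 - x$1)) * eb (m * (x$2 - a$2)) * eb (m * (b$2 - x$2))"

lemma Qc_bx: "Qc (bx m a b)"
proof -
  have e: "sm1 (\<lambda>t. eb (m' * t + c))" for m' c by (rule sm1_affine[OF sm1_eb])
  have "Qc (\<lambda>x. eb (m * x$1 + (- m * a$1)) * eb ((-m) * x$1 + m * b$1) * eb (m * x$2 + (- m * a$2)) * eb ((-m) * x$2 + m * b$2))"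
    by (intro Qc.mult Qc.coord[of "\<lambda>t. eb (_ * t + _)", unfolded] e)
  moreover have "(\<lambda>x. eb (m * x$1 + (- m * a$1)) * eb ((-m) * x$1 + m * b$1) * eb (m * x$2 + (- m * a$2)) * eb ((-m) * x$2 + m * b$2)) = bx m a b"
    by (auto simp: fun_eq_iff bx_def algebra_simps)
  ultimately show ?thesis by simp
qed

lemma bx_support: "m > 0 \<Longrightarrow> {x. bx m a b x \<noteq> 0} = box a b"
proof -
  assume m: "m > 0"
  have "bx m a b x \<noteq> 0 \<longleftrightarrow> x \<in> box a b" for x
  proof -
    have z: "eb s \<noteq> 0 \<longleftrightarrow> s > 0" for s using eb_pos eb_nonneg[of s] by (metis less_le)
    have "bx m a b x \<noteq> 0 \<longleftrightarrow> (m * (x$1 - a$1) > 0 \<and> m * (b$1 - x$1) > 0 \<and> m * (x$2 - a$2) > 0 \<and> m * (b$2 - x$2) > 0)"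
      unfolding bx_def using z by simp
    also have "\<dots> \<longleftrightarrow> x \<in> box a b" using m by (simp add: mem_box_cart forall_2 zero_less_mult_iff)
    finally show ?thesis .
  qed
  then show ?thesis by auto
qed

lemma bx_bounds: "0 \<le> bx m a b x" "bx m a b x \<le> 1"
  unfolding bx_def using eb_nonneg eb_le1 by (auto intro!: mult_le_one mult_nonneg_nonneg)

lemma bx_test: "m > 0 \<Longrightarrow> cbox a b \<subseteq> \<Omega> \<Longrightarrow> test_fun \<Omega> (bx m a b)"
proof -
  assume m: "m > 0" and sub: "cbox a b \<subseteq> \<Omega>"
  have cl: "closure {x. bx m a b x \<noteq> 0} \<subseteq> cbox a b"
    unfolding bx_support[OF m] by (metis box_subset_cbox closed_cbox closure_minimal)
  have "compact (closure {x. bx m a b x \<noteq> 0})"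
    using cl by (meson bounded_cbox bounded_subset closure_subset compact_closure)
  then show ?thesis unfolding test_fun_def using cl sub Qc_Cinf[OF Qc_bx] by auto
qed

lemma bx_lim: "((\<lambda>n. bx (real (Suc n)) a b x) \<longlongrightarrow> indicator (box a b) x) sequentially"
proof (cases "x \<in> box a b")
  case True
  then have p: "x$1 - a$1 > 0" "b$1 - x$1 > 0" "x$2 - a$2 > 0" "b$2 - x$2 > 0" by (auto simp: mem_box_cart forall_2)
  have "((\<lambda>n. bx (real (Suc n)) a b x) \<longlongrightarrow> 1 * 1 * 1 * 1) sequentially"
    unfolding bx_def by (intro tendsto_mult eb_lim p)
  then show ?thesis using True by simp
next
  case False
  have "bx (real (Suc n)) a b x = 0" for n using bx_support[of "real (Suc n)" a b] False by auto
  then show ?thesis using False by simp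
qed

lemma cont_bound_on: "continuous_on UNIV (f :: real^2 \<Rightarrow> real) \<Longrightarrow> \<exists>M\<ge>0. \<forall>y\<in>cball 0 r. \<bar>f y\<bar> \<le> M"
proof -
  assume c: "continuous_on UNIV f"
  have "compact (f ` cball 0 r)" by (rule compact_continuous_image) (use c continuous_on_subset in auto)
  then obtain M where "\<forall>z\<in>f ` cball 0 r. norm z \<le> M" using compact_imp_bounded bounded_iff by metis
  then show ?thesis by (intro exI[of _ "max M 0"]) auto
qed

lemma integrable_bounded_supp:
  fixes f :: "real^2 \<Rightarrow> real"
  assumes "f \<in> borel_measurable lborel" "\<And>y. norm y \<le> r \<Longrightarrow> \<bar>f y\<bar> \<le> M" "\<And>y. norm y > r \<Longrightarrow> f y = 0"
  shows "integrable lborel f"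
proof (rule Bochner_Integration.integrable_bound)
  show "integrable lborel (\<lambda>x. M * indicator (cball (0::real^2) r) x)"
    by (intro integrable_mult_right integrable_real_indicator) (use emeasure_lborel_cball_finite in \<open>auto simp: top_unique less_top\<close>)
  show "f \<in> borel_measurable lborel" by fact
  show "AE x in lborel. norm (f x) \<le> norm (M * indicator (cball (0::real^2) r) x)"
  proof (rule AE_I2)
    fix x show "norm (f x) \<le> norm (M * indicator (cball (0::real^2) r) x)"
    proof (cases "norm x \<le> r")
      case True then show ?thesis using assms(2)[of x] by (auto simp: indicator_def)
    next
      case False then show ?thesis using assms(3)[of x] by auto
    qed
  qed
qed

lemma zero_int_deriv:
  fixes h h' :: "real^2 \<Rightarrow> real"
  assumes ch: "continuous_on UNIV h" and ch': "continuous_on UNIV h'"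
  and der: "\<And>x. ((\<lambda>t. h (x + t *\<^sub>R axis i 1)) has_real_derivative h' x) (at 0)"
  and supp: "\<And>x. norm x > R \<Longrightarrow> h x = 0"
  shows "integral\<^sup>L lborel h' = 0"
proof -
  define e :: "real^2" where "e = axis i 1"
  have ne: "norm e = 1" unfolding e_def by (simp add: norm_axis_1)
  have far: "norm x > R + tz \<Longrightarrow> \<bar>t\<bar> \<le> tz \<Longrightarrow> h (x + t *\<^sub>R e) = 0" for x t tz
  proof -
    assume a: "norm x > R + tz" "\<bar>t\<bar> \<le> tz"
    have "norm (x + t *\<^sub>R e) \<ge> norm x - \<bar>t\<bar>" using norm_triangle_ineq2[of x "- t *\<^sub>R e"] ne by simp
    then show ?thesis using a supp by simp
  qed
  obtain M where M: "M \<ge> 0" "\<And>y. y \<in> cball 0 (R+2) \<Longrightarrow> \<bar>h' y\<bar> \<le> M" using cont_bound_on[OF ch'] by blast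
  obtain Mh where Mh: "Mh \<ge> 0" "\<And>y. y \<in> cball 0 (R+2) \<Longrightarrow> \<bar>h y\<bar> \<le> Mh" using cont_bound_on[OF ch] by blast
  have hmeas: "(\<lambda>x. h (x + c)) \<in> borel_measurable lborel" for c
  proof -
    have "continuous_on UNIV (\<lambda>x. h (x + c))"
    proof -
      have "continuous_on UNIV (\<lambda>x::real^2. x + c)" by (intro continuous_intros)
      then show ?thesis using continuous_on_compose[of UNIV "\<lambda>x. x + c" h] ch continuous_on_subset by (auto simp: o_def)
    qed
    then show ?thesis by (simp add: borel_measurable_continuous_onI)
  qed
  have hb: "h \<in> borel_measurable borel" using ch by (simp add: borel_measurable_continuous_onI)
  have h'meas: "h' \<in> borel_measurable lborel" using ch' by (simp add: borel_measurable_continuous_onI)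
  have hint: "integrable lborel h"
    by (rule integrable_bounded_supp[where r="R+2" and M=Mh]) (use hmeas[of 0] Mh supp in auto)
  have hint2: "integrable lborel (\<lambda>x. h (x + c))" for c
  proof -
    have "integrable (distr lborel borel ((+) c)) h" using hint by (simp add: lborel_distr_plus)
    then have "integrable lborel (\<lambda>x. h (c + x))" by (subst (asm) integrable_distr_eq) (use hb in auto)
    then show ?thesis by (simp add: add.commute)
  qed
  have transl: "integral\<^sup>L lborel (\<lambda>x. h (x + c)) = integral\<^sup>L lborel h" for c
  proof -
    have "integral\<^sup>L lborel h = integral\<^sup>L (distr lborel borel ((+) c)) h" by (simp add: lborel_distr_plus)
    also have "\<dots> = integral\<^sup>L lborel (\<lambda>x. h (c + x))" by (rule integral_distr) (use hb in auto)
    finally show ?thesis by (simp add: add.commute)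
  qed
  define t :: "nat \<Rightarrow> real" where "t n = 1 / real (Suc n)" for n
  have tpos: "t n > 0" "t n \<le> 1" for n unfolding t_def by auto
  define s where "s n x = (h (x + t n *\<^sub>R e) - h x) / t n" for n x
  have sint: "integral\<^sup>L lborel (s n) = 0" for n
  proof -
    have "integral\<^sup>L lborel (s n) = (integral\<^sup>L lborel (\<lambda>x. h (x + t n *\<^sub>R e)) - integral\<^sup>L lborel h) / t n"
      unfolding s_def using hint hint2 by (simp add: Bochner_Integration.integral_diff)
    then show ?thesis using transl by simp
  qed
  have gder: "((\<lambda>t. h (x + t *\<^sub>R e)) has_real_derivative h' (x + z *\<^sub>R e)) (at z)" for x z
  proof -
    have "((\<lambda>t. h ((x + z *\<^sub>R e) + t *\<^sub>R e)) has_real_derivative h' (x + z *\<^sub>R e)) (at 0)"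
      using der unfolding e_def by blast
    then have "((\<lambda>t. h (x + (t + z) *\<^sub>R e)) has_real_derivative h' (x + z *\<^sub>R e)) (at 0)"
      by (simp add: algebra_simps)
    then show ?thesis using DERIV_shift[of "\<lambda>t. h (x + t *\<^sub>R e)" _ 0 z] by simp
  qed
  have lim: "(\<lambda>n. s n x) \<longlonglongrightarrow> h' x" for x
  proof -
    have "((\<lambda>y. (h (x + y *\<^sub>R e) - h (x + 0 *\<^sub>R e)) / (y - 0)) \<longlongrightarrow> h' (x + 0 *\<^sub>R e)) (at 0)"
      using gder[of x 0] unfolding has_field_derivative_iff .
    then have L: "((\<lambda>y. (h (x + y *\<^sub>R e) - h x) / y) \<longlongrightarrow> h' x) (at 0)" by simp
    have tl: "t \<longlonglongrightarrow> 0" unfolding t_def using LIMSEQ_inverse_real_of_nat by (simp add: inverse_eq_divide)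
    have "((\<lambda>y. (h (x + y *\<^sub>R e) - h x) / y) \<circ> t) \<longlonglongrightarrow> h' x"
    proof -
      have "\<forall>X. (\<forall>i. X i \<in> UNIV - {0}) \<longrightarrow> X \<longlonglongrightarrow> 0 \<longrightarrow> ((\<lambda>y. (h (x + y *\<^sub>R e) - h x) / y) \<circ> X) \<longlonglongrightarrow> h' x"
        using L unfolding tendsto_at_iff_sequentially .
      moreover have "\<forall>i. t i \<in> UNIV - {0}" using tpos by (simp add: less_imp_neq[symmetric])
      ultimately show ?thesis using tl by blast
    qed
    then show ?thesis unfolding s_def o_def .
  qed
  have bound: "\<bar>s n x\<bar> \<le> M * indicator (cball 0 (R+1)) x" for n x
  proof (cases "norm x \<le> R + 1")
    case True
    have "\<exists>z. 0 < z \<and> z < t n \<and> h (x + t n *\<^sub>R e) - h (x + 0 *\<^sub>R e) = (t n - 0) * h' (x + z *\<^sub>R e)"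
      by (rule MVT2) (use tpos gder in auto)
    then obtain z where z: "0 < z" "z < t n" "h (x + t n *\<^sub>R e) - h (x + 0 *\<^sub>R e) = (t n - 0) * h' (x + z *\<^sub>R e)"
      by blast
    have "norm (x + z *\<^sub>R e) \<le> norm x + z" using norm_triangle_ineq[of x "z *\<^sub>R e"] ne z by simp
    then have "x + z *\<^sub>R e \<in> cball 0 (R+2)" using True z tpos[of n] by simp
    then have "\<bar>h' (x + z *\<^sub>R e)\<bar> \<le> M" using M by blast
    moreover have "s n x = h' (x + z *\<^sub>R e)" unfolding s_def using z tpos[of n] by simp
    ultimately show ?thesis using True by (simp add: indicator_def)
  next
    case False
    then have "h (x + t n *\<^sub>R e) = 0" "h x = 0" using far[where x=x and t="t n" and tz=1] far[where x=x and t=0 and tz=1] tpos[of n] by auto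
    then show ?thesis using M by (simp add: s_def indicator_def)
  qed
  have "(\<lambda>n. integral\<^sup>L lborel (s n)) \<longlonglongrightarrow> integral\<^sup>L lborel h'"
  proof (rule integral_dominated_convergence[where w="\<lambda>x. M * indicator (cball 0 (R+1)) x"])
    show "h' \<in> borel_measurable lborel" by fact
    show "s n \<in> borel_measurable lborel" for n unfolding s_def using hmeas[of 0] hmeas[of "t n *\<^sub>R e"] by simp
    show "integrable lborel (\<lambda>x. M * indicator (cball (0::real^2) (R+1)) x)"
      by (intro integrable_mult_right integrable_real_indicator) (use emeasure_lborel_cball_finite in \<open>auto simp: top_unique less_top\<close>)
    show "AE x in lborel. (\<lambda>n. s n x) \<longlonglongrightarrow> h' x" using lim by simp
    show "AE x in lborel. norm (s n x) \<le> M * indicator (cball 0 (R+1)) x" for n using bound by simp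
  qed
  then show ?thesis using sint LIMSEQ_unique[OF _ tendsto_const] by simp
qed

lemma box_ae_zero:
  fixes h :: "real^2 \<Rightarrow> real"
  assumes hi: "integrable lborel h"
  and z: "\<And>c d. integral\<^sup>L lborel (\<lambda>x. indicator (box c d) x * h x) = 0"
  shows "AE x in lborel. h x = 0"
proof -
  have hm[measurable]: "h \<in> borel_measurable lborel" using hi by auto
  define f1 where "f1 x = ennreal (max 0 (h x))" for x
  define f2 where "f2 x = ennreal (max 0 (- h x))" for x
  have f1m[measurable]: "f1 \<in> borel_measurable lborel" unfolding f1_def by measurable
  have f2m[measurable]: "f2 \<in> borel_measurable lborel" unfolding f2_def by measurable
  have i1: "integrable lborel (\<lambda>x. max 0 (h x) * indicator A x)" if "A \<in> sets lborel" for A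
    by (rule Bochner_Integration.integrable_bound[OF integrable_norm[OF hi]]) (use that in \<open>auto simp: indicator_def\<close>)
  have i2: "integrable lborel (\<lambda>x. max 0 (- h x) * indicator A x)" if "A \<in> sets lborel" for A
    by (rule Bochner_Integration.integrable_bound[OF integrable_norm[OF hi]]) (use that in \<open>auto simp: indicator_def\<close>)
  have em1: "emeasure (density lborel f1) A = ennreal (integral\<^sup>L lborel (\<lambda>x. max 0 (h x) * indicator A x))"
    if A: "A \<in> sets lborel" for A
  proof -
    have "emeasure (density lborel f1) A = (\<integral>\<^sup>+x. f1 x * indicator A x \<partial>lborel)"
      using A by (simp add: emeasure_density)
    also have "\<dots> = (\<integral>\<^sup>+x. ennreal (max 0 (h x) * indicator A x) \<partial>lborel)"
      unfolding f1_def by (intro nn_integral_cong) (auto simp: indicator_def)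
    also have "\<dots> = ennreal (integral\<^sup>L lborel (\<lambda>x. max 0 (h x) * indicator A x))"
      by (rule nn_integral_eq_integral[OF i1[OF A]]) auto
    finally show ?thesis .
  qed
  have em2: "emeasure (density lborel f2) A = ennreal (integral\<^sup>L lborel (\<lambda>x. max 0 (- h x) * indicator A x))"
    if A: "A \<in> sets lborel" for A
  proof -
    have "emeasure (density lborel f2) A = (\<integral>\<^sup>+x. f2 x * indicator A x \<partial>lborel)"
      using A by (simp add: emeasure_density)
    also have "\<dots> = (\<integral>\<^sup>+x. ennreal (max 0 (- h x) * indicator A x) \<partial>lborel)"
      unfolding f2_def by (intro nn_integral_cong) (auto simp: indicator_def)
    also have "\<dots> = ennreal (integral\<^sup>L lborel (\<lambda>x. max 0 (- h x) * indicator A x))"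
      by (rule nn_integral_eq_integral[OF i2[OF A]]) auto
    finally show ?thesis .
  qed
  have "density lborel f1 = density lborel f2"
  proof (rule measure_eqI_generator_eq[where E="range (\<lambda>(a, b). box a b)" and \<Omega>=UNIV
        and A="\<lambda>n::nat. box (- (real n *\<^sub>R One)) (real n *\<^sub>R One)"])
    show "Int_stable (range (\<lambda>(a, b). box a b :: (real^2) set))"
      by (auto simp: Int_stable_def box_Int_box)
    show "range (\<lambda>(a, b). box a b :: (real^2) set) \<subseteq> Pow UNIV" by simp
    show "sets (density lborel f1) = sigma_sets UNIV (range (\<lambda>(a, b). box a b))"
      by (simp add: borel_eq_box)
    show "sets (density lborel f2) = sigma_sets UNIV (range (\<lambda>(a, b). box a b))"
      by (simp add: borel_eq_box)
    show "range (\<lambda>n::nat. box (- (real n *\<^sub>R One)) (real n *\<^sub>R One)) \<subseteq> range (\<lambda>(a, b). box a b :: (real^2) set)"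
      by auto
    show "(\<Union>i::nat. box (- (real i *\<^sub>R One)) (real i *\<^sub>R One)) = (UNIV :: (real^2) set)"
      by (rule UN_box_eq_UNIV)
    show "emeasure (density lborel f1) (box (- (real i *\<^sub>R One)) (real i *\<^sub>R One)) \<noteq> \<infinity>" for i
      by (subst em1) auto
    fix X assume "X \<in> range (\<lambda>(a, b). box a b :: (real^2) set)"
    then obtain c d where X: "X = box c d" by auto
    have "integral\<^sup>L lborel (\<lambda>x. max 0 (h x) * indicator X x) - integral\<^sup>L lborel (\<lambda>x. max 0 (- h x) * indicator X x)
      = integral\<^sup>L lborel (\<lambda>x. indicator X x * h x)"
    proof -
      have XS: "X \<in> sets lborel" using X by simp
      have "integral\<^sup>L lborel (\<lambda>x. max 0 (h x) * indicator X x) - integral\<^sup>L lborel (\<lambda>x. max 0 (- h x) * indicator X x)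
        = integral\<^sup>L lborel (\<lambda>x. max 0 (h x) * indicator X x - max 0 (- h x) * indicator X x)"
        by (rule Bochner_Integration.integral_diff[symmetric]) (rule i1[OF XS], rule i2[OF XS])
      also have "\<dots> = integral\<^sup>L lborel (\<lambda>x. indicator X x * h x)"
        by (rule Bochner_Integration.integral_cong) (auto simp: indicator_def)
      finally show ?thesis .
    qed
    then have "integral\<^sup>L lborel (\<lambda>x. max 0 (h x) * indicator X x) = integral\<^sup>L lborel (\<lambda>x. max 0 (- h x) * indicator X x)"
      using z[of c d] X by simp
    then show "emeasure (density lborel f1) X = emeasure (density lborel f2) X"
      using em1 em2 X by simp
  qed
  then have "AE x in lborel. f1 x = f2 x" by (intro sigma_finite_measure.density_unique[OF sigma_finite_lborel]) auto
  then show ?thesis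
  proof (rule AE_mp, intro AE_I2 impI)
    fix x assume "f1 x = f2 x"
    then have "max 0 (h x) = max 0 (- h x)" unfolding f1_def f2_def by (simp add: ennreal_inj)
    then show "h x = 0" by linarith
  qed
qed

lemma open_sets_lborel: "open \<Omega> \<Longrightarrow> \<Omega> \<in> sets lborel" by simp

lemma bounded_cball_sub: "bounded \<Omega> \<Longrightarrow> \<exists>r. \<Omega> \<subseteq> cball (0::real^2) r"
proof -
  assume "bounded \<Omega>"
  then obtain e where "\<forall>y\<in>\<Omega>. dist 0 y \<le> e" using bounded_any_center by blast
  then show ?thesis by (intro exI[of _ e]) (auto simp: subset_eq)
qed

lemma cont_L2:
  assumes o: "open \<Omega>" and b: "bounded \<Omega>" and c: "continuous_on UNIV f"
  shows "L2 \<Omega> f"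
proof (rule L2I)
  have fm: "f \<in> borel_measurable lborel" using c by (simp add: borel_measurable_continuous_onI)
  show m: "(\<lambda>x. indicator \<Omega> x * f x) \<in> borel_measurable lborel"
    using fm o by (intro borel_measurable_times borel_measurable_indicator) auto
  obtain r where r: "\<Omega> \<subseteq> cball 0 r" using bounded_cball_sub[OF b] by blast
  obtain M where M: "M \<ge> 0" "\<And>y. y \<in> cball 0 r \<Longrightarrow> \<bar>f y\<bar> \<le> M" using cont_bound_on[OF c] by blast
  show "integrable lborel (\<lambda>x. (indicator \<Omega> x * f x)^2)"
  proof (rule integrable_bounded_supp[where r=r and M="M^2"])
    show "(\<lambda>x. (indicator \<Omega> x * f x)^2) \<in> borel_measurable lborel" using m by simp
    fix y
    show "norm y \<le> r \<Longrightarrow> \<bar>(indicator \<Omega> y * f y)^2\<bar> \<le> M^2"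
    proof -
      assume "norm y \<le> r"
      then have "\<bar>f y\<bar> \<le> M" using M(2)[of y] by simp
      then have "\<bar>f y\<bar>^2 \<le> M^2" by (intro power_mono) auto
      then have "(f y)^2 \<le> M^2" by simp
      moreover have "\<bar>(indicator \<Omega> y * f y)^2\<bar> = (indicator \<Omega> y * f y)^2" by simp
      moreover have "(indicator \<Omega> y * f y)^2 \<le> (f y)^2" by (simp add: indicator_def)
      ultimately show ?thesis by linarith
    qed
    show "norm y > r \<Longrightarrow> (indicator \<Omega> y * f y)^2 = 0" using r by (auto simp: indicator_def)
  qed
qed

lemma L2_L1:
  assumes o: "open \<Omega>" and b: "bounded \<Omega>" and D: "L2 \<Omega> D"
  shows "integrable lborel (\<lambda>x. indicator \<Omega> x * D x)"
proof (rule Bochner_Integration.integrable_bound)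
  obtain r where r: "\<Omega> \<subseteq> cball 0 r" using bounded_cball_sub[OF b] by blast
  have "emeasure lborel \<Omega> < \<infinity>"
    by (rule le_less_trans[OF emeasure_mono[OF r] emeasure_lborel_cball_finite]) simp
  then have "integrable lborel (indicator \<Omega> :: real^2 \<Rightarrow> real)"
    using o by (intro integrable_real_indicator) (auto simp: less_top)
  then show "integrable lborel (\<lambda>x. indicator \<Omega> x + (indicator \<Omega> x * D x)^2)"
    using L2_sq_int[OF D] by simp
  show "(\<lambda>x. indicator \<Omega> x * D x) \<in> borel_measurable lborel" using L2_meas[OF D] .
  show "AE x in lborel. norm (indicator \<Omega> x * D x) \<le> norm (indicator \<Omega> x + (indicator \<Omega> x * D x)^2)"
  proof (rule AE_I2)
    fix x
    have "\<bar>a\<bar> \<le> 1 + a^2" for a :: real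
    proof -
      have "0 \<le> (\<bar>a\<bar> - 1)^2" by simp
      then have "2 * \<bar>a\<bar> \<le> \<bar>a\<bar>^2 + 1" by (simp add: power2_diff)
      moreover have "\<bar>a\<bar>^2 = a^2" by simp
      moreover have "a^2 \<ge> 0" by simp
      ultimately show ?thesis by linarith
    qed
    then show "norm (indicator \<Omega> x * D x) \<le> norm (indicator \<Omega> x + (indicator \<Omega> x * D x)^2)"
      by (auto simp: indicator_def)
  qed
qed

lemma tf_Ck: "test_fun \<Omega> \<phi> \<Longrightarrow> Ck k \<phi>" unfolding test_fun_def C_inf_def by blast

lemma tf_cont: "test_fun \<Omega> \<phi> \<Longrightarrow> continuous_on UNIV \<phi>"
  using tf_Ck[of \<Omega> \<phi> 0] by simp

lemma tf_pd_cont: "test_fun \<Omega> \<phi> \<Longrightarrow> continuous_on UNIV (pd i \<phi>)"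
  using tf_Ck[of \<Omega> \<phi> "Suc 0"] by simp

lemma tf_line: "test_fun \<Omega> \<phi> \<Longrightarrow> ((\<lambda>t. \<phi> (x + t *\<^sub>R axis i 1)) has_real_derivative pd i \<phi> x) (at 0)"
  using tf_Ck[of \<Omega> \<phi> "Suc 0"] unfolding pd_def by (simp add: DERIV_deriv_iff_real_differentiable)

lemma tf_vanish: "test_fun \<Omega> \<phi> \<Longrightarrow> x \<notin> \<Omega> \<Longrightarrow> \<phi> x = 0"
proof (rule ccontr)
  assume t: "test_fun \<Omega> \<phi>" and x: "x \<notin> \<Omega>" and n: "\<phi> x \<noteq> 0"
  have "x \<in> {x. \<phi> x \<noteq> 0}" using n by simp
  then have "x \<in> closure {x. \<phi> x \<noteq> 0}" by (rule subsetD[OF closure_subset])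
  then show False using t x unfolding test_fun_def by auto
qed

lemma tf_supp: "test_fun \<Omega> \<phi> \<Longrightarrow> \<exists>R. \<forall>x. norm x > R \<longrightarrow> \<phi> x = 0"
proof -
  assume t: "test_fun \<Omega> \<phi>"
  then have "bounded (closure {x. \<phi> x \<noteq> 0})" unfolding test_fun_def using compact_imp_bounded by blast
  then obtain R where R: "\<forall>x \<in> closure {x. \<phi> x \<noteq> 0}. norm x \<le> R" using bounded_iff by blast
  have "\<phi> x = 0" if x: "norm x > R" for x
  proof (rule ccontr)
    assume "\<phi> x \<noteq> 0"
    then have "x \<in> {x. \<phi> x \<noteq> 0}" by simp
    then have "x \<in> closure {x. \<phi> x \<noteq> 0}" by (rule subsetD[OF closure_subset])
    then have "norm x \<le> R" using R by blast
    then show False using x by simp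
  qed
  then show ?thesis by blast
qed

lemma IBP_test:
  assumes o: "open \<Omega>" and b: "bounded \<Omega>" and p: "test_fun \<Omega> \<phi>" and q: "test_fun \<Omega> \<psi>"
  shows "(LINT x:\<Omega>|lborel. \<phi> x * pd i \<psi> x) = - (LINT x:\<Omega>|lborel. pd i \<phi> x * \<psi> x)"
proof -
  define h' where "h' x = pd i \<phi> x * \<psi> x + \<phi> x * pd i \<psi> x" for x
  obtain R where R: "\<And>x. norm x > R \<Longrightarrow> \<phi> x = 0" using tf_supp[OF p] by blast
  have c1: "continuous_on UNIV (\<lambda>x. \<phi> x * \<psi> x)" using tf_cont[OF p] tf_cont[OF q] by (intro continuous_intros)
  have c2: "continuous_on UNIV h'" unfolding h'_def
    using tf_cont[OF p] tf_cont[OF q] tf_pd_cont[OF p] tf_pd_cont[OF q] by (intro continuous_intros)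
  have d: "((\<lambda>t. \<phi> (x + t *\<^sub>R axis i 1) * \<psi> (x + t *\<^sub>R axis i 1)) has_real_derivative h' x) (at 0)" for x
    using DERIV_mult[OF tf_line[OF p] tf_line[OF q]] unfolding h'_def by (simp add: mult.commute)
  have z: "integral\<^sup>L lborel h' = 0"
    by (rule zero_int_deriv[OF c1 c2 d, of R]) (use R in simp)
  have L: "L2 \<Omega> \<phi>" "L2 \<Omega> \<psi>" "L2 \<Omega> (pd i \<phi>)" "L2 \<Omega> (pd i \<psi>)"
    using cont_L2[OF o b] tf_cont[OF p] tf_cont[OF q] tf_pd_cont[OF p] tf_pd_cont[OF q] by auto
  have "(LINT x:\<Omega>|lborel. \<phi> x * pd i \<psi> x) + (LINT x:\<Omega>|lborel. pd i \<phi> x * \<psi> x)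
      = (LINT x:\<Omega>|lborel. \<phi> x * pd i \<psi> x + pd i \<phi> x * \<psi> x)"
    by (rule set_integral_add(2)[symmetric]) (use L2_set_int L in auto)
  also have "\<dots> = integral\<^sup>L lborel h'"
    unfolding set_lebesgue_integral_def
    by (rule Bochner_Integration.integral_cong) (auto simp: indicator_def h'_def tf_vanish[OF p] tf_vanish[OF q])
  finally show ?thesis using z by simp
qed

lemma weak_pd_test: "open \<Omega> \<Longrightarrow> bounded \<Omega> \<Longrightarrow> test_fun \<Omega> \<phi> \<Longrightarrow> weak_pd \<Omega> i \<phi> (pd i \<phi>)"
  unfolding weak_pd_def using IBP_test by blast

lemma box_int_zero:
  assumes o: "open \<Omega>" and b: "bounded \<Omega>" and D: "L2 \<Omega> D"
  and z: "\<And>\<phi>. test_fun \<Omega> \<phi> \<Longrightarrow> (LINT x:\<Omega>|lborel. D x * \<phi> x) = 0"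
  and sub: "cbox a b \<subseteq> \<Omega>"
  shows "integral\<^sup>L lborel (\<lambda>x. indicator (box a b) x * D x) = 0"
proof -
  define s where "s n x = indicator \<Omega> x * (D x * bx (real (Suc n)) a b x)" for n x
  have bxc: "continuous_on UNIV (bx m a b)" for m using Qc_cont[OF Qc_bx] .
  have "(\<lambda>n. integral\<^sup>L lborel (s n)) \<longlonglongrightarrow> integral\<^sup>L lborel (\<lambda>x. indicator \<Omega> x * (D x * indicator (box a b) x))"
  proof (rule integral_dominated_convergence[where w="\<lambda>x. norm (indicator \<Omega> x * D x)"])
    have dm: "(\<lambda>x. indicator \<Omega> x * D x) \<in> borel_measurable lborel" using L2_meas[OF D] .
    have e1: "(\<lambda>x. indicator \<Omega> x * (D x * indicator (box a b) x)) = (\<lambda>x. (indicator \<Omega> x * D x) * indicator (box a b) x)"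
      by (simp add: fun_eq_iff)
    show "(\<lambda>x. indicator \<Omega> x * (D x * indicator (box a b) x)) \<in> borel_measurable lborel"
      unfolding e1 by (rule borel_measurable_times[OF dm]) simp
    show "s n \<in> borel_measurable lborel" for n
    proof -
      have "s n = (\<lambda>x. (indicator \<Omega> x * D x) * bx (real (Suc n)) a b x)" unfolding s_def by (simp add: fun_eq_iff)
      moreover have bm: "bx (real (Suc n)) a b \<in> borel_measurable lborel"
        using bxc by (simp add: borel_measurable_continuous_onI)
      ultimately show ?thesis using borel_measurable_times[OF dm bm] by simp
    qed
    show "integrable lborel (\<lambda>x. norm (indicator \<Omega> x * D x))" using L2_L1[OF o b D] by simp
    show "AE x in lborel. (\<lambda>n. s n x) \<longlonglongrightarrow> indicator \<Omega> x * (D x * indicator (box a b) x)"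
      unfolding s_def by (intro AE_I2 tendsto_mult tendsto_const bx_lim)
    show "AE x in lborel. norm (s n x) \<le> norm (indicator \<Omega> x * D x)" for n
    proof (rule AE_I2)
      fix x
      have "\<bar>bx (real (Suc n)) a b x\<bar> \<le> 1" using bx_bounds by simp
      then have "\<bar>D x\<bar> * \<bar>bx (real (Suc n)) a b x\<bar> \<le> \<bar>D x\<bar>" by (simp add: mult_left_le)
      then show "norm (s n x) \<le> norm (indicator \<Omega> x * D x)" unfolding s_def
        by (simp add: abs_mult indicator_def)
    qed
  qed
  moreover have "integral\<^sup>L lborel (s n) = 0" for n
  proof -
    have "test_fun \<Omega> (bx (real (Suc n)) a b)" by (rule bx_test[OF _ sub]) simp
    then show ?thesis using z unfolding s_def set_lebesgue_integral_def by simp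
  qed
  ultimately have "integral\<^sup>L lborel (\<lambda>x. indicator \<Omega> x * (D x * indicator (box a b) x)) = 0"
    using LIMSEQ_unique[OF _ tendsto_const] by simp
  moreover have "(\<lambda>x. indicator \<Omega> x * (D x * indicator (box a b) x)) = (\<lambda>x. indicator (box a b) x * D x)"
    using sub box_subset_cbox by (auto simp: fun_eq_iff indicator_def)
  ultimately show ?thesis by simp
qed

lemma cbox_minus_box_null: "AE x in lborel. x \<notin> cbox a b - box a (b::real^2)"
proof -
  have "emeasure lborel (cbox a b - box a b) = emeasure lborel (cbox a b) - emeasure lborel (box a b)"
    by (rule emeasure_Diff) (auto simp: box_subset_cbox emeasure_lborel_box_eq)
  also have "\<dots> = 0" by (simp add: emeasure_lborel_box_eq emeasure_lborel_cbox_eq)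
  finally have "cbox a b - box a b \<in> null_sets lborel" by (auto simp: null_sets_def)
  then show ?thesis by (rule AE_not_in)
qed

lemma cbox_ae:
  assumes o: "open \<Omega>" and b: "bounded \<Omega>" and D: "L2 \<Omega> D"
  and z: "\<And>\<phi>. test_fun \<Omega> \<phi> \<Longrightarrow> (LINT x:\<Omega>|lborel. D x * \<phi> x) = 0"
  and sub: "cbox a b \<subseteq> \<Omega>"
  shows "AE x in lborel. x \<in> cbox a b \<longrightarrow> D x = 0"
proof -
  define h where "h x = indicator (cbox a b) x * D x" for x
  have hi: "integrable lborel h"
  proof -
    have "h = (\<lambda>x. (indicator \<Omega> x * D x) * indicator (cbox a b) x)" using sub
      by (auto simp: h_def fun_eq_iff indicator_def)
    then show ?thesis using L2_L1[OF o b D] by (simp add: integrable_real_mult_indicator)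
  qed
  have "AE x in lborel. h x = 0"
  proof (rule box_ae_zero[OF hi])
    fix c d :: "real^2"
    define a' :: "real^2" where "a' = (\<chi> i. max (c$i) (a$i))"
    define b' :: "real^2" where "b' = (\<chi> i. min (d$i) (b$i))"
    have bb: "box c d \<inter> box a b = box a' b'" by (auto simp: a'_def b'_def mem_box_cart)
    have cb: "cbox a' b' \<subseteq> \<Omega>" using sub by (auto simp: a'_def b'_def mem_box_cart)
    have "integral\<^sup>L lborel (\<lambda>x. indicator (box c d) x * h x) = integral\<^sup>L lborel (\<lambda>x. indicator (box a' b') x * D x)"
    proof (rule integral_cong_AE)
      show "(\<lambda>x. indicator (box c d) x * h x) \<in> borel_measurable lborel" using hi by auto
      have "(\<lambda>x. indicator (box a' b') x * D x) = (\<lambda>x. indicator (box a' b') x * (indicator \<Omega> x * D x))"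
        using cb box_subset_cbox by (auto simp: fun_eq_iff indicator_def)
      then show "(\<lambda>x. indicator (box a' b') x * D x) \<in> borel_measurable lborel" using L2_meas[OF D] by simp
      show "AE x in lborel. indicator (box c d) x * h x = indicator (box a' b') x * D x"
        using cbox_minus_box_null[of a b]
      proof (rule AE_mp, intro AE_I2 impI)
        fix x assume "x \<notin> cbox a b - box a b"
        then show "indicator (box c d) x * h x = indicator (box a' b') x * D x"
          unfolding h_def using bb box_subset_cbox[of a b] by (auto simp: indicator_def)
      qed
    qed
    then show "integral\<^sup>L lborel (\<lambda>x. indicator (box c d) x * h x) = 0"
      using box_int_zero[OF o b D z cb] by simp
  qed
  then show ?thesis by (rule AE_mp) (auto simp: h_def indicator_def)
qed

lemma ae_zero_Omega:
  assumes o: "open \<Omega>" and b: "bounded \<Omega>" and D: "L2 \<Omega> D"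
  and z: "\<And>\<phi>. test_fun \<Omega> \<phi> \<Longrightarrow> (LINT x:\<Omega>|lborel. D x * \<phi> x) = 0"
  shows "AE x in lborel. x \<in> \<Omega> \<longrightarrow> D x = 0"
proof -
  obtain \<D> where Dd: "countable \<D>" "\<D> \<subseteq> Pow \<Omega>" "\<And>X. X \<in> \<D> \<Longrightarrow> \<exists>a b. X = cbox a b" "\<Union>\<D> = \<Omega>"
    using open_countable_Union_open_cbox[OF o] by blast
  have "\<forall>X\<in>\<D>. AE x in lborel. x \<in> X \<longrightarrow> D x = 0"
  proof
    fix X assume X: "X \<in> \<D>"
    then obtain a b where ab: "X = cbox a b" using Dd(3) by blast
    have "cbox a b \<subseteq> \<Omega>" using X ab Dd(2) by auto
    then show "AE x in lborel. x \<in> X \<longrightarrow> D x = 0" using cbox_ae[OF o b D z] ab by simp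
  qed
  then have "AE x in lborel. \<forall>X\<in>\<D>. x \<in> X \<longrightarrow> D x = 0" by (subst AE_ball_countable[OF Dd(1)])
  then show ?thesis by (rule AE_mp) (use Dd(4) in auto)
qed

lemma tf_L2: "open \<Omega> \<Longrightarrow> bounded \<Omega> \<Longrightarrow> test_fun \<Omega> \<phi> \<Longrightarrow> L2 \<Omega> \<phi>"
  using cont_L2 tf_cont by blast
lemma tf_pd_L2: "open \<Omega> \<Longrightarrow> bounded \<Omega> \<Longrightarrow> test_fun \<Omega> \<phi> \<Longrightarrow> L2 \<Omega> (pd i \<phi>)"
  using cont_L2 tf_pd_cont by blast

lemma weak_pd_ipS: "weak_pd \<Omega> i u g \<longleftrightarrow> (\<forall>\<phi>. test_fun \<Omega> \<phi> \<longrightarrow> ipS \<Omega> u (pd i \<phi>) = - ipS \<Omega> g \<phi>)"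
  unfolding weak_pd_def ipS_def ..

lemma weak_unique:
  assumes o: "open \<Omega>" and b: "bounded \<Omega>" and g: "L2 \<Omega> g1" "L2 \<Omega> g2"
  and w: "weak_pd \<Omega> i u g1" "weak_pd \<Omega> i u g2"
  shows "AE x in lborel. x \<in> \<Omega> \<longrightarrow> g1 x = g2 x"
proof -
  have "AE x in lborel. x \<in> \<Omega> \<longrightarrow> g1 x - g2 x = 0"
  proof (rule ae_zero_Omega[OF o b L2_diff[OF g]])
    fix \<phi> assume t: "test_fun \<Omega> \<phi>"
    have "ipS \<Omega> (\<lambda>x. 1 * g1 x + (-1) * g2 x) \<phi> = 1 * ipS \<Omega> g1 \<phi> + (-1) * ipS \<Omega> g2 \<phi>"
      by (rule ipS_lin) (use g tf_L2[OF o b t] in auto)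
    also have "\<dots> = 0" using w t unfolding weak_pd_ipS by simp
    finally show "(LINT x:\<Omega>|lborel. (g1 x - g2 x) * \<phi> x) = 0" unfolding ipS_def by simp
  qed
  then show ?thesis by auto
qed

lemma wpd_spec: "H1 \<Omega> u \<Longrightarrow> L2 \<Omega> (wpd \<Omega> i u) \<and> weak_pd \<Omega> i u (wpd \<Omega> i u)"
proof -
  assume "H1 \<Omega> u"
  then have "\<exists>g. L2 \<Omega> g \<and> weak_pd \<Omega> i u g" unfolding H1_def by blast
  then show ?thesis unfolding wpd_def by (rule someI_ex)
qed

lemma H1_L2: "H1 \<Omega> u \<Longrightarrow> L2 \<Omega> u" unfolding H1_def by blast

lemma wpd_ae: "open \<Omega> \<Longrightarrow> bounded \<Omega> \<Longrightarrow> H1 \<Omega> u \<Longrightarrow> L2 \<Omega> g \<Longrightarrow> weak_pd \<Omega> i u g \<Longrightarrow>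
  AE x in lborel. x \<in> \<Omega> \<longrightarrow> wpd \<Omega> i u x = g x"
  using weak_unique wpd_spec by blast

lemma weak_pd_lin:
  assumes o: "open \<Omega>" and b: "bounded \<Omega>" and L: "L2 \<Omega> u" "L2 \<Omega> v" "L2 \<Omega> g1" "L2 \<Omega> g2"
  and w: "weak_pd \<Omega> i u g1" "weak_pd \<Omega> i v g2"
  shows "weak_pd \<Omega> i (\<lambda>x. a * u x + c * v x) (\<lambda>x. a * g1 x + c * g2 x)"
  unfolding weak_pd_ipS
proof (intro allI impI)
  fix \<phi> assume t: "test_fun \<Omega> \<phi>"
  have "ipS \<Omega> (\<lambda>x. a * u x + c * v x) (pd i \<phi>) = a * ipS \<Omega> u (pd i \<phi>) + c * ipS \<Omega> v (pd i \<phi>)"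
    by (rule ipS_lin) (use L tf_pd_L2[OF o b t] in auto)
  also have "\<dots> = - (a * ipS \<Omega> g1 \<phi> + c * ipS \<Omega> g2 \<phi>)" using w t unfolding weak_pd_ipS by simp
  also have "a * ipS \<Omega> g1 \<phi> + c * ipS \<Omega> g2 \<phi> = ipS \<Omega> (\<lambda>x. a * g1 x + c * g2 x) \<phi>"
    by (rule ipS_lin[symmetric]) (use L tf_L2[OF o b t] in auto)
  finally show "ipS \<Omega> (\<lambda>x. a * u x + c * v x) (pd i \<phi>) = - ipS \<Omega> (\<lambda>x. a * g1 x + c * g2 x) \<phi>" .
qed

lemma L2_lin: "L2 \<Omega> u \<Longrightarrow> L2 \<Omega> v \<Longrightarrow> L2 \<Omega> (\<lambda>x. a * u x + c * v x)"
  by (intro L2_add L2_scale)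

lemma H1_lin:
  assumes o: "open \<Omega>" and b: "bounded \<Omega>" and h: "H1 \<Omega> u" "H1 \<Omega> v"
  shows "H1 \<Omega> (\<lambda>x. a * u x + c * v x)"
  unfolding H1_def
proof (intro conjI allI)
  show "L2 \<Omega> (\<lambda>x. a * u x + c * v x)" using h H1_L2 L2_lin by blast
  fix i
  show "\<exists>g. L2 \<Omega> g \<and> weak_pd \<Omega> i (\<lambda>x. a * u x + c * v x) g"
    using weak_pd_lin[OF o b H1_L2[OF h(1)] H1_L2[OF h(2)], of "wpd \<Omega> i u" "wpd \<Omega> i v" i a c]
      wpd_spec[OF h(1), of i] wpd_spec[OF h(2), of i] L2_lin by blast
qed

lemma wpd_lin:
  assumes o: "open \<Omega>" and b: "bounded \<Omega>" and h: "H1 \<Omega> u" "H1 \<Omega> v"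
  shows "AE x in lborel. x \<in> \<Omega> \<longrightarrow> wpd \<Omega> i (\<lambda>x. a * u x + c * v x) x = a * wpd \<Omega> i u x + c * wpd \<Omega> i v x"
  by (rule wpd_ae[OF o b H1_lin[OF o b h]])
     (use wpd_spec[OF h(1), of i] wpd_spec[OF h(2), of i] L2_lin weak_pd_lin[OF o b H1_L2[OF h(1)] H1_L2[OF h(2)]] in auto)

lemma ipS_meas: "L2 \<Omega> f \<Longrightarrow> L2 \<Omega> g \<Longrightarrow> (\<lambda>x. indicator \<Omega> x *\<^sub>R (f x * g x)) \<in> borel_measurable lborel"
  using L2_prod_int by auto

lemma ipS_cong_AE:
  assumes "L2 \<Omega> f" "L2 \<Omega> f'" "L2 \<Omega> g" "L2 \<Omega> g'"
  and "AE x in lborel. x \<in> \<Omega> \<longrightarrow> f x = f' x" "AE x in lborel. x \<in> \<Omega> \<longrightarrow> g x = g' x"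
  shows "ipS \<Omega> f g = ipS \<Omega> f' g'"
  unfolding ipS_def set_lebesgue_integral_def
proof (rule integral_cong_AE)
  show "(\<lambda>x. indicator \<Omega> x *\<^sub>R (f x * g x)) \<in> borel_measurable lborel" using ipS_meas assms by blast
  show "(\<lambda>x. indicator \<Omega> x *\<^sub>R (f' x * g' x)) \<in> borel_measurable lborel" using ipS_meas assms by blast
  show "AE x in lborel. indicator \<Omega> x *\<^sub>R (f x * g x) = indicator \<Omega> x *\<^sub>R (f' x * g' x)"
    using assms(5,6) by eventually_elim (auto simp: indicator_def)
qed

lemma ipS_lin_r: "L2 \<Omega> f \<Longrightarrow> L2 \<Omega> g \<Longrightarrow> L2 \<Omega> h \<Longrightarrow>
   ipS \<Omega> h (\<lambda>x. a * f x + b * g x) = a * ipS \<Omega> h f + b * ipS \<Omega> h g"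
proof -
  assume L: "L2 \<Omega> f" "L2 \<Omega> g" "L2 \<Omega> h"
  have "ipS \<Omega> h (\<lambda>x. a * f x + b * g x) = ipS \<Omega> (\<lambda>x. a * f x + b * g x) h" by (rule ipS_sym)
  also have "\<dots> = a * ipS \<Omega> f h + b * ipS \<Omega> g h" by (rule ipS_lin[OF L])
  also have "ipS \<Omega> f h = ipS \<Omega> h f" by (rule ipS_sym)
  also have "ipS \<Omega> g h = ipS \<Omega> h g" by (rule ipS_sym)
  finally show ?thesis .
qed

lemma ipS_quad: "L2 \<Omega> f \<Longrightarrow> L2 \<Omega> h \<Longrightarrow>
  ipS \<Omega> (\<lambda>x. a * f x + c * h x) (\<lambda>x. a * f x + c * h x) = a^2 * ipS \<Omega> f f + 2 * a * c * ipS \<Omega> f h + c^2 * ipS \<Omega> h h"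
proof -
  assume f: "L2 \<Omega> f" and h: "L2 \<Omega> h"
  have L: "L2 \<Omega> (\<lambda>x. a * f x + c * h x)" using f h L2_lin by blast
  have "ipS \<Omega> (\<lambda>x. a * f x + c * h x) (\<lambda>x. a * f x + c * h x)
     = a * ipS \<Omega> f (\<lambda>x. a * f x + c * h x) + c * ipS \<Omega> h (\<lambda>x. a * f x + c * h x)"
    by (rule ipS_lin[OF f h L])
  also have "\<dots> = a * (a * ipS \<Omega> f f + c * ipS \<Omega> f h) + c * (a * ipS \<Omega> h f + c * ipS \<Omega> h h)"
    using ipS_lin_r[OF f h f] ipS_lin_r[OF f h h] by simp
  finally show ?thesis using ipS_sym[of \<Omega> h f] by (simp add: power2_eq_square algebra_simps)
qed

lemma ipS_young:
  assumes f: "L2 \<Omega> f" and h: "L2 \<Omega> h" and s: "s > 0"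
  shows "2 * \<bar>ipS \<Omega> f h\<bar> \<le> s * ipS \<Omega> f f + ipS \<Omega> h h / s"
proof -
  have p1: "0 \<le> s^2 * ipS \<Omega> f f + 2 * s * (-1) * ipS \<Omega> f h + (-1)^2 * ipS \<Omega> h h"
    using ipS_quad[OF f h, of s "-1"] ipS_nonneg[of \<Omega> "\<lambda>x. s * f x + (-1) * h x"] by simp
  have p2: "0 \<le> s^2 * ipS \<Omega> f f + 2 * s * 1 * ipS \<Omega> f h + 1^2 * ipS \<Omega> h h"
    using ipS_quad[OF f h, of s 1] ipS_nonneg[of \<Omega> "\<lambda>x. s * f x + 1 * h x"] by simp
  have "2 * s * \<bar>ipS \<Omega> f h\<bar> \<le> s^2 * ipS \<Omega> f f + ipS \<Omega> h h" using p1 p2 by (simp add: abs_if)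
  then have "s * (2 * \<bar>ipS \<Omega> f h\<bar>) \<le> s * (s * ipS \<Omega> f f + ipS \<Omega> h h / s)"
    using s by (simp add: power2_eq_square algebra_simps)
  then show ?thesis using s by (simp only: mult_le_cancel_left_pos)
qed

lemma tf_H1: "open \<Omega> \<Longrightarrow> bounded \<Omega> \<Longrightarrow> test_fun \<Omega> \<phi> \<Longrightarrow> H1 \<Omega> \<phi>"
proof -
  assume a: "open \<Omega>" "bounded \<Omega>" "test_fun \<Omega> \<phi>"
  have "\<forall>i. \<exists>g. L2 \<Omega> g \<and> weak_pd \<Omega> i \<phi> g"
  proof
    fix i show "\<exists>g. L2 \<Omega> g \<and> weak_pd \<Omega> i \<phi> g"
      using tf_pd_L2[OF a, of i] weak_pd_test[OF a, of i] by blast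
  qed
  then show ?thesis unfolding H1_def using tf_L2[OF a] by simp
qed

lemma small_zero: "(\<And>\<delta>. \<delta> > 0 \<Longrightarrow> \<bar>A\<bar> \<le> \<delta> * C) \<Longrightarrow> C \<ge> 0 \<Longrightarrow> A = (0::real)"
proof (rule ccontr)
  assume h: "\<And>\<delta>. \<delta> > 0 \<Longrightarrow> \<bar>A\<bar> \<le> \<delta> * C" and C: "C \<ge> 0" and A: "A \<noteq> 0"
  have pos: "\<bar>A\<bar> / (C + 1) > 0" using A C by simp
  have "\<bar>A\<bar> \<le> (\<bar>A\<bar> / (C + 1)) * C" by (rule h[OF pos])
  also have "\<dots> = \<bar>A\<bar> * (C / (C + 1))" by simp
  also have "\<dots> < \<bar>A\<bar> * 1" using A C by (intro mult_strict_left_mono) auto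
  finally show False by simp
qed

lemma H01_ibp:
  assumes o: "open \<Omega>" and b: "bounded \<Omega>" and w: "H01 \<Omega> w" and q: "H1 \<Omega> q"
  shows "ipS \<Omega> (wpd \<Omega> j w) q = - ipS \<Omega> w (wpd \<Omega> j q)"
proof -
  have wH: "H1 \<Omega> w" using w unfolding H01_def by blast
  have Lw: "L2 \<Omega> w" "L2 \<Omega> (wpd \<Omega> j w)" using wH H1_L2 wpd_spec by blast+
  have Lq: "L2 \<Omega> q" "L2 \<Omega> (wpd \<Omega> j q)" using q H1_L2 wpd_spec by blast+
  have wq: "weak_pd \<Omega> j q (wpd \<Omega> j q)" using wpd_spec[OF q] by blast
  define A where "A = ipS \<Omega> (wpd \<Omega> j w) q + ipS \<Omega> w (wpd \<Omega> j q)"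
  define C where "C = 2 + ipS \<Omega> q q + ipS \<Omega> (wpd \<Omega> j q) (wpd \<Omega> j q)"
  have C0: "C \<ge> 0" unfolding C_def using ipS_nonneg[of \<Omega> q] ipS_nonneg[of \<Omega> "wpd \<Omega> j q"] by simp
  have "A = 0"
  proof (rule small_zero[OF _ C0])
    fix \<delta> :: real assume d: "\<delta> > 0"
    have d2: "\<delta>^2 > 0" using d by simp
    obtain \<phi> where t: "test_fun \<Omega> \<phi>" and sm: "H1norm2 \<Omega> (\<lambda>x. w x - \<phi> x) < \<delta>^2"
      using w d2 unfolding H01_def by blast
    have Hp: "H1 \<Omega> \<phi>" using tf_H1[OF o b t] .
    have Lp: "L2 \<Omega> \<phi>" "L2 \<Omega> (pd j \<phi>)" using tf_L2[OF o b t] tf_pd_L2[OF o b t] by auto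
    define r where "r = (\<lambda>x. w x - \<phi> x)"
    have r_eq: "r = (\<lambda>x. 1 * w x + (-1) * \<phi> x)" unfolding r_def by simp
    have Hr: "H1 \<Omega> r" unfolding r_eq by (rule H1_lin[OF o b wH Hp])
    have Lr: "L2 \<Omega> r" "L2 \<Omega> (wpd \<Omega> j r)" using Hr H1_L2 wpd_spec by blast+
    define g' where "g' = (\<lambda>x. wpd \<Omega> j w x - pd j \<phi> x)"
    have Lg': "L2 \<Omega> g'" unfolding g'_def using Lw Lp L2_diff by blast
    have ae1: "AE x in lborel. x \<in> \<Omega> \<longrightarrow> wpd \<Omega> j r x = 1 * wpd \<Omega> j w x + (-1) * wpd \<Omega> j \<phi> x"
      unfolding r_eq by (rule wpd_lin[OF o b wH Hp])
    have ae2: "AE x in lborel. x \<in> \<Omega> \<longrightarrow> wpd \<Omega> j \<phi> x = pd j \<phi> x"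
      by (rule wpd_ae[OF o b Hp Lp(2) weak_pd_test[OF o b t]])
    have ae: "AE x in lborel. x \<in> \<Omega> \<longrightarrow> wpd \<Omega> j r x = g' x"
      using ae1 ae2 by eventually_elim (simp add: g'_def)
    have bnd_r: "ipS \<Omega> r r < \<delta>^2" and bnd_g: "ipS \<Omega> (wpd \<Omega> j r) (wpd \<Omega> j r) < \<delta>^2"
    proof -
      have "ipS \<Omega> (wpd \<Omega> j r) (wpd \<Omega> j r) \<le> gradS \<Omega> r r" unfolding gradS_def
        by (rule member_le_sum) (auto simp: ipS_nonneg)
      moreover have "gradS \<Omega> r r \<ge> 0" unfolding gradS_def by (rule sum_nonneg) (simp add: ipS_nonneg)
      moreover have "ipS \<Omega> r r \<ge> 0" by (rule ipS_nonneg)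
      ultimately show "ipS \<Omega> r r < \<delta>^2" "ipS \<Omega> (wpd \<Omega> j r) (wpd \<Omega> j r) < \<delta>^2"
        using sm unfolding H1norm2_def r_def by linarith+
    qed
    have e1: "ipS \<Omega> (wpd \<Omega> j w) q = ipS \<Omega> g' q + ipS \<Omega> (pd j \<phi>) q"
    proof -
      have "wpd \<Omega> j w = (\<lambda>x. 1 * g' x + 1 * pd j \<phi> x)" unfolding g'_def by simp
      then show ?thesis using ipS_lin[OF Lg' Lp(2) Lq(1), of 1 1] by simp
    qed
    have e2: "ipS \<Omega> w (wpd \<Omega> j q) = ipS \<Omega> r (wpd \<Omega> j q) + ipS \<Omega> \<phi> (wpd \<Omega> j q)"
    proof -
      have "w = (\<lambda>x. 1 * r x + 1 * \<phi> x)" unfolding r_def by simp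
      then show ?thesis using ipS_lin[OF Lr(1) Lp(1) Lq(2), of 1 1] by simp
    qed
    have e3: "ipS \<Omega> (pd j \<phi>) q + ipS \<Omega> \<phi> (wpd \<Omega> j q) = 0"
      using wq t unfolding weak_pd_ipS by (simp add: ipS_sym)
    have e4: "ipS \<Omega> g' q = ipS \<Omega> (wpd \<Omega> j r) q"
      by (rule ipS_cong_AE[OF Lg' Lr(2) Lq(1) Lq(1)]) (use ae in auto)
    have A_eq: "A = ipS \<Omega> (wpd \<Omega> j r) q + ipS \<Omega> r (wpd \<Omega> j q)"
      unfolding A_def using e1 e2 e3 e4 by simp
    have y1: "2 * \<bar>ipS \<Omega> (wpd \<Omega> j r) q\<bar> \<le> (1/\<delta>) * ipS \<Omega> (wpd \<Omega> j r) (wpd \<Omega> j r) + ipS \<Omega> q q / (1/\<delta>)"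
      by (rule ipS_young[OF Lr(2) Lq(1)]) (use d in simp)
    have y2: "2 * \<bar>ipS \<Omega> r (wpd \<Omega> j q)\<bar> \<le> (1/\<delta>) * ipS \<Omega> r r + ipS \<Omega> (wpd \<Omega> j q) (wpd \<Omega> j q) / (1/\<delta>)"
      by (rule ipS_young[OF Lr(1) Lq(2)]) (use d in simp)
    have z1: "(1/\<delta>) * ipS \<Omega> (wpd \<Omega> j r) (wpd \<Omega> j r) \<le> \<delta>"
    proof -
      have "(1/\<delta>) * ipS \<Omega> (wpd \<Omega> j r) (wpd \<Omega> j r) \<le> (1/\<delta>) * \<delta>^2"
        using bnd_g d by (intro mult_left_mono) auto
      then show ?thesis using d by (simp add: power2_eq_square)
    qed
    have z2: "(1/\<delta>) * ipS \<Omega> r r \<le> \<delta>"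
    proof -
      have "(1/\<delta>) * ipS \<Omega> r r \<le> (1/\<delta>) * \<delta>^2"
        using bnd_r d by (intro mult_left_mono) auto
      then show ?thesis using d by (simp add: power2_eq_square)
    qed
    have "2 * \<bar>A\<bar> \<le> \<delta> + \<delta> * ipS \<Omega> q q + (\<delta> + \<delta> * ipS \<Omega> (wpd \<Omega> j q) (wpd \<Omega> j q))"
    proof -
      have "\<bar>A\<bar> \<le> \<bar>ipS \<Omega> (wpd \<Omega> j r) q\<bar> + \<bar>ipS \<Omega> r (wpd \<Omega> j q)\<bar>" unfolding A_eq by (rule abs_triangle_ineq)
      moreover have "ipS \<Omega> q q / (1/\<delta>) = \<delta> * ipS \<Omega> q q" by simp
      moreover have "ipS \<Omega> (wpd \<Omega> j q) (wpd \<Omega> j q) / (1/\<delta>) = \<delta> * ipS \<Omega> (wpd \<Omega> j q) (wpd \<Omega> j q)" by simp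
      ultimately show ?thesis using y1 y2 z1 z2 by linarith
    qed
    then show "\<bar>A\<bar> \<le> \<delta> * C" unfolding C_def by (simp add: algebra_simps)
  qed
  then show ?thesis unfolding A_def by simp
qed

definition gf :: "(real^2) set \<Rightarrow> (real^2 \<Rightarrow> real) \<Rightarrow> real^2 \<Rightarrow> real^2" where
  "gf \<Omega> p = (\<lambda>x. \<chi> i. wpd \<Omega> i p x)"

lemma comp_gf[simp]: "comp j (gf \<Omega> p) = wpd \<Omega> j p" unfolding comp_def gf_def by simp

lemma ipV_comp:
  assumes "\<And>j. L2 \<Omega> (comp j u)" "\<And>j. L2 \<Omega> (comp j w)"
  shows "ipV \<Omega> u w = (\<Sum>j\<in>UNIV. ipS \<Omega> (comp j u) (comp j w))"
proof -
  have "ipV \<Omega> u w = integral\<^sup>L lborel (\<lambda>x. \<Sum>j\<in>UNIV. indicator \<Omega> x *\<^sub>R (comp j u x * comp j w x))"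
    unfolding ipV_def set_lebesgue_integral_def
    by (rule Bochner_Integration.integral_cong) (auto simp: inner_vec_def comp_def scaleR_sum_right)
  also have "\<dots> = (\<Sum>j\<in>UNIV. integral\<^sup>L lborel (\<lambda>x. indicator \<Omega> x *\<^sub>R (comp j u x * comp j w x)))"
    by (rule Bochner_Integration.integral_sum) (use L2_prod_int assms in auto)
  also have "\<dots> = (\<Sum>j\<in>UNIV. ipS \<Omega> (comp j u) (comp j w))"
    unfolding ipS_def set_lebesgue_integral_def ..
  finally show ?thesis .
qed

lemma gradS_gf: "H1 \<Omega> p \<Longrightarrow> H1 \<Omega> q \<Longrightarrow> gradS \<Omega> p q = ipV \<Omega> (gf \<Omega> p) (gf \<Omega> q)"
  unfolding gradS_def by (subst ipV_comp) (auto simp: wpd_spec)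

lemma H01V_H1: "H01V \<Omega> v \<Longrightarrow> H1 \<Omega> (comp j v)" unfolding H01V_def H01_def by blast

lemma divg_L2: "H01V \<Omega> v \<Longrightarrow> L2 \<Omega> (divg \<Omega> v)"
proof -
  assume v: "H01V \<Omega> v"
  have "L2 \<Omega> (wpd \<Omega> j (comp j v))" for j using wpd_spec H01V_H1[OF v] by blast
  then show ?thesis unfolding divg_def by (intro L2_sum) auto
qed

lemma div_ibp:
  assumes o: "open \<Omega>" and b: "bounded \<Omega>" and v: "H01V \<Omega> v" and p: "H1 \<Omega> p"
  shows "ipS \<Omega> p (divg \<Omega> v) = - ipV \<Omega> v (gf \<Omega> p)"
proof -
  have Lw: "L2 \<Omega> (wpd \<Omega> j (comp j v))" for j using wpd_spec H01V_H1[OF v] by blast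
  have "ipS \<Omega> p (divg \<Omega> v) = ipS \<Omega> (divg \<Omega> v) p" by (rule ipS_sym)
  also have "\<dots> = (\<Sum>j\<in>UNIV. ipS \<Omega> (wpd \<Omega> j (comp j v)) p)"
    unfolding divg_def by (rule ipS_sum_left) (use Lw H1_L2[OF p] in auto)
  also have "\<dots> = (\<Sum>j\<in>UNIV. - ipS \<Omega> (comp j v) (wpd \<Omega> j p))"
    by (rule sum.cong) (use H01_ibp[OF o b _ p] v in \<open>auto simp: H01V_def\<close>)
  also have "\<dots> = - ipV \<Omega> v (gf \<Omega> p)"
    by (subst ipV_comp) (auto simp: sum_negf wpd_spec[OF p] H1_L2 H01V_H1[OF v])
  finally show ?thesis .
qed

lemma grad_diff:
  assumes o: "open \<Omega>" and b: "bounded \<Omega>" and p: "H1 \<Omega> p" "H1 \<Omega> p'"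
  shows "gradS \<Omega> (\<lambda>x. p x - p' x) (\<lambda>x. p x - p' x)
    = (\<Sum>i\<in>UNIV. ipS \<Omega> (\<lambda>x. wpd \<Omega> i p x - wpd \<Omega> i p' x) (\<lambda>x. wpd \<Omega> i p x - wpd \<Omega> i p' x))"
  unfolding gradS_def
proof (rule sum.cong[OF refl])
  fix i
  have req: "(\<lambda>x. p x - p' x) = (\<lambda>x. 1 * p x + (-1) * p' x)" by simp
  have H: "H1 \<Omega> (\<lambda>x. p x - p' x)" unfolding req by (rule H1_lin[OF o b p])
  have ae: "AE x in lborel. x \<in> \<Omega> \<longrightarrow> wpd \<Omega> i (\<lambda>x. p x - p' x) x = wpd \<Omega> i p x - wpd \<Omega> i p' x"
    unfolding req using wpd_lin[OF o b p, of i 1 "-1"] by simp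
  have L: "L2 \<Omega> (\<lambda>x. wpd \<Omega> i p x - wpd \<Omega> i p' x)" using wpd_spec p L2_diff by blast
  show "ipS \<Omega> (wpd \<Omega> i (\<lambda>x. p x - p' x)) (wpd \<Omega> i (\<lambda>x. p x - p' x))
      = ipS \<Omega> (\<lambda>x. wpd \<Omega> i p x - wpd \<Omega> i p' x) (\<lambda>x. wpd \<Omega> i p x - wpd \<Omega> i p' x)"
    by (rule ipS_cong_AE[OF _ L _ L]) (use wpd_spec[OF H] ae in auto)
qed

lemma gradS_nonneg: "gradS \<Omega> p p \<ge> 0" unfolding gradS_def by (rule sum_nonneg) (simp add: ipS_nonneg)
lemma gradV_nonneg: "gradV \<Omega> v v \<ge> 0" unfolding gradV_def by (rule sum_nonneg) (simp add: gradS_nonneg)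

lemma gradS_scale:
  assumes o: "open \<Omega>" and b: "bounded \<Omega>" and p: "H1 \<Omega> p"
  shows "gradS \<Omega> (\<lambda>x. c * p x) (\<lambda>x. c * p x) = c^2 * gradS \<Omega> p p"
  unfolding gradS_def sum_distrib_left
proof (rule sum.cong[OF refl])
  fix i
  have req: "(\<lambda>x. c * p x) = (\<lambda>x. c * p x + 0 * p x)" by simp
  have H: "H1 \<Omega> (\<lambda>x. c * p x)" using H1_lin[OF o b p p, of c 0] by simp
  have ae: "AE x in lborel. x \<in> \<Omega> \<longrightarrow> wpd \<Omega> i (\<lambda>x. c * p x) x = c * wpd \<Omega> i p x + 0 * wpd \<Omega> i p x"
    using wpd_lin[OF o b p p, of i c 0] by simp
  have Lp: "L2 \<Omega> (wpd \<Omega> i p)" using wpd_spec p by blast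
  have L: "L2 \<Omega> (\<lambda>x. c * wpd \<Omega> i p x + 0 * wpd \<Omega> i p x)" using Lp L2_lin by blast
  have "ipS \<Omega> (wpd \<Omega> i (\<lambda>x. c * p x)) (wpd \<Omega> i (\<lambda>x. c * p x))
      = ipS \<Omega> (\<lambda>x. c * wpd \<Omega> i p x + 0 * wpd \<Omega> i p x) (\<lambda>x. c * wpd \<Omega> i p x + 0 * wpd \<Omega> i p x)"
    by (rule ipS_cong_AE[OF _ L _ L]) (use wpd_spec[OF H] ae in auto)
  also have "\<dots> = c^2 * ipS \<Omega> (wpd \<Omega> i p) (wpd \<Omega> i p)" using ipS_quad[OF Lp Lp, of c 0] by simp
  finally show "ipS \<Omega> (wpd \<Omega> i (\<lambda>x. c * p x)) (wpd \<Omega> i (\<lambda>x. c * p x)) = c^2 * ipS \<Omega> (wpd \<Omega> i p) (wpd \<Omega> i p)" .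
qed

lemma gradV_scale:
  assumes o: "open \<Omega>" and b: "bounded \<Omega>" and v: "H01V \<Omega> v"
  shows "gradV \<Omega> (\<lambda>x. c *\<^sub>R v x) (\<lambda>x. c *\<^sub>R v x) = c^2 * gradV \<Omega> v v"
  unfolding gradV_def sum_distrib_left
proof (rule sum.cong[OF refl])
  fix j
  have "comp j (\<lambda>x. c *\<^sub>R v x) = (\<lambda>x. c * comp j v x)" by (simp add: comp_def)
  then show "gradS \<Omega> (comp j (\<lambda>x. c *\<^sub>R v x)) (comp j (\<lambda>x. c *\<^sub>R v x)) = c^2 * gradS \<Omega> (comp j v) (comp j v)"
    using gradS_scale[OF o b H01V_H1[OF v]] by simp
qed

instantiation "fun" :: (type, real_vector) real_vector
begin
definition scaleR_fun :: "real \<Rightarrow> ('a \<Rightarrow> 'b) \<Rightarrow> 'a \<Rightarrow> 'b" where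
  "scaleR_fun r f = (\<lambda>x. r *\<^sub>R f x)"
instance by standard (auto simp: scaleR_fun_def fun_eq_iff algebra_simps)
end

lemma scaleR_fun_apply[simp]: "(r *\<^sub>R f) x = r *\<^sub>R f x" by (simp add: scaleR_fun_def)

lemma U_H01V: "fin_dim_subspaceV \<Omega> U \<Longrightarrow> v \<in> U \<Longrightarrow> H01V \<Omega> v"
  unfolding fin_dim_subspaceV_def by blast

lemma Q_H1: "fin_dim_subspaceS \<Omega> Q \<Longrightarrow> q \<in> Q \<Longrightarrow> H1 \<Omega> q"
  unfolding fin_dim_subspaceS_def by blast

lemma U_scale: "fin_dim_subspaceV \<Omega> U \<Longrightarrow> v \<in> U \<Longrightarrow> (\<lambda>x. a *\<^sub>R v x) \<in> U"
proof -
  assume fU: "fin_dim_subspaceV \<Omega> U" and v: "v \<in> U"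
  obtain B where B: "U = {(\<lambda>x. \<Sum>b\<in>B. c b *\<^sub>R b x) | c. True}" using fU unfolding fin_dim_subspaceV_def by blast
  obtain c where c: "v = (\<lambda>x. \<Sum>b\<in>B. c b *\<^sub>R b x)" using v B by blast
  have eq: "(\<lambda>x. a *\<^sub>R v x) = (\<lambda>x. \<Sum>b\<in>B. (a * c b) *\<^sub>R b x)" unfolding c by (simp add: scaleR_sum_right)
  have "(\<lambda>x. a *\<^sub>R v x) \<in> {(\<lambda>x. \<Sum>b\<in>B. c b *\<^sub>R b x) | c. True}"
    by (rule CollectI, rule exI[of _ "\<lambda>b. a * c b"]) (use eq in auto)
  then show ?thesis using B by simp
qed

lemma normHm1_bound:
  assumes o: "open \<Omega>" and b: "bounded \<Omega>" and Hm: "Hminus1 \<Omega> F"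
  and fU: "fin_dim_subspaceV \<Omega> U" and v: "v \<in> U"
  shows "\<bar>F v\<bar> \<le> normHm1 \<Omega> F * sqrt (gradV \<Omega> v v)"
proof -
  have vH: "H01V \<Omega> v" using U_H01V[OF fU v] .
  obtain C where C: "\<And>v. H01V \<Omega> v \<Longrightarrow> \<bar>F v\<bar> \<le> C * sqrt (gradV \<Omega> v v)" using Hm unfolding Hminus1_def by blast
  have sc: "\<And>a u. H01V \<Omega> u \<Longrightarrow> F (\<lambda>x. a *\<^sub>R u x) = a * F u" using Hm unfolding Hminus1_def by blast
  define s where "s = sqrt (gradV \<Omega> v v)"
  have s0: "s \<ge> 0" unfolding s_def using gradV_nonneg[of \<Omega> v] by simp
  show ?thesis
  proof (cases "s = 0")
    case True
    then have "\<bar>F v\<bar> \<le> 0" using C[OF vH] unfolding s_def by simp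
    then show ?thesis using True unfolding s_def by simp
  next
    case False
    then have sp: "s > 0" using s0 by simp
    define w where "w = (\<lambda>x. (1/s) *\<^sub>R v x)"
    have wU: "w \<in> U" unfolding w_def by (rule U_scale[OF fU v])
    have wH: "H01V \<Omega> w" using U_H01V[OF fU wU] .
    have gw: "gradV \<Omega> w w = 1"
    proof -
      have "gradV \<Omega> w w = (1/s)^2 * gradV \<Omega> v v" unfolding w_def by (rule gradV_scale[OF o b vH])
      also have "gradV \<Omega> v v = s^2" unfolding s_def using gradV_nonneg[of \<Omega> v] by simp
      finally show ?thesis using sp by (simp add: power2_eq_square)
    qed
    have Fw: "F w = (1/s) * F v" unfolding w_def by (rule sc[OF vH])
    have bdd: "bdd_above {\<bar>F v\<bar> | v. H01V \<Omega> v \<and> gradV \<Omega> v v \<le> 1}"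
    proof (rule bdd_aboveI[of _ "max C 0"])
      fix y assume "y \<in> {\<bar>F v\<bar> | v. H01V \<Omega> v \<and> gradV \<Omega> v v \<le> 1}"
      then obtain v' where v': "y = \<bar>F v'\<bar>" "H01V \<Omega> v'" "gradV \<Omega> v' v' \<le> 1" by blast
      have sq: "0 \<le> sqrt (gradV \<Omega> v' v')" "sqrt (gradV \<Omega> v' v') \<le> 1" using v'(3) gradV_nonneg by auto
      have "C * sqrt (gradV \<Omega> v' v') \<le> max C 0"
      proof (cases "C \<ge> 0")
        case True then show ?thesis using sq by (simp add: mult_le_one[of C] mult_left_le)
      next
        case False then show ?thesis using sq by (simp add: mult_nonpos_nonneg)
      qed
      then show "y \<le> max C 0" using C[OF v'(2)] v'(1) by simp
    qed
    have "\<bar>F w\<bar> \<le> normHm1 \<Omega> F" unfolding normHm1_def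
      by (rule cSup_upper[OF _ bdd]) (use wH gw in auto)
    then have "\<bar>F v\<bar> / s \<le> normHm1 \<Omega> F" using Fw sp by (simp add: abs_mult)
    then show ?thesis using sp unfolding s_def[symmetric] by (simp add: field_simps)
  qed
qed

definition SS :: "(real^2) set \<Rightarrow> (real^2 \<Rightarrow> real^2) set" where
  "SS \<Omega> = {F. \<forall>j. L2 \<Omega> (comp j F)}"

lemma comp_plus[simp]: "comp j (F + G) = (\<lambda>x. comp j F x + comp j G x)" by (simp add: comp_def fun_eq_iff)

lemma ipS_add: "L2 \<Omega> f \<Longrightarrow> L2 \<Omega> g \<Longrightarrow> L2 \<Omega> h \<Longrightarrow> ipS \<Omega> (\<lambda>x. f x + g x) h = ipS \<Omega> f h + ipS \<Omega> g h"
  using ipS_lin[of \<Omega> f g h 1 1] by simp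
lemma ipS_scl: "L2 \<Omega> f \<Longrightarrow> L2 \<Omega> h \<Longrightarrow> ipS \<Omega> (\<lambda>x. a * f x) h = a * ipS \<Omega> f h"
  using ipS_lin[of \<Omega> f f h a 0] by simp
lemma comp_scale[simp]: "comp j (c *\<^sub>R F) = (\<lambda>x. c * comp j F x)" by (simp add: comp_def fun_eq_iff)
lemma comp_zero[simp]: "comp j 0 = (\<lambda>x. 0)" by (simp add: comp_def fun_eq_iff)

lemma SS_subspace: "subspace (SS \<Omega>)"
  unfolding subspace_def SS_def
proof (intro conjI ballI allI)
  show "0 \<in> {F. \<forall>j. L2 \<Omega> (comp j F)}" by (simp add: L2_zero)
  fix x y assume "x \<in> {F. \<forall>j. L2 \<Omega> (comp j F)}" "y \<in> {F. \<forall>j. L2 \<Omega> (comp j F)}"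
  then show "x + y \<in> {F. \<forall>j. L2 \<Omega> (comp j F)}" by (auto intro: L2_add)
next
  fix c x assume "x \<in> {F. \<forall>j. L2 \<Omega> (comp j F)}"
  then show "c *\<^sub>R x \<in> {F. \<forall>j. L2 \<Omega> (comp j F)}" by (auto intro: L2_scale)
qed

lemma SS_ipsp: "ipsp (SS \<Omega>) (ipV \<Omega>)"
proof
  show "subspace (SS \<Omega>)" by (rule SS_subspace)
  fix x y z assume x: "x \<in> SS \<Omega>" and y: "y \<in> SS \<Omega>" and z: "z \<in> SS \<Omega>"
  have xy: "x + y \<in> SS \<Omega>" using SS_subspace x y subspace_add by blast
  show "ipV \<Omega> (x + y) z = ipV \<Omega> x z + ipV \<Omega> y z"
    using x y z xy by (simp add: ipV_comp SS_def ipS_add sum.distrib)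
next
  fix x z a assume x: "x \<in> SS \<Omega>" and z: "z \<in> SS \<Omega>"
  have xa: "a *\<^sub>R x \<in> SS \<Omega>" using SS_subspace x subspace_mul by blast
  show "ipV \<Omega> (a *\<^sub>R x) z = a * ipV \<Omega> x z"
    using x z xa by (simp add: ipV_comp SS_def sum_distrib_left ipS_scl)
next
  fix x y show "ipV \<Omega> x y = ipV \<Omega> y x" unfolding ipV_def by (simp add: inner_commute)
next
  fix x show "ipV \<Omega> x x \<ge> 0" unfolding ipV_def set_lebesgue_integral_def
    by (rule integral_nonneg_AE) auto
qed

lemma comp_minus[simp]: "comp j (F - G) = (\<lambda>x. comp j F x - comp j G x)" by (simp add: comp_def fun_eq_iff)

lemma main_lemma:
  fixes \<Omega> :: "(real^2) set" and \<tau> \<nu> :: real and f :: "real \<Rightarrow> ((real^2 \<Rightarrow> real^2) \<Rightarrow> real)"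
    and U :: "(real^2 \<Rightarrow> real^2) set" and Q :: "(real^2 \<Rightarrow> real) set"
    and u :: "nat \<Rightarrow> real^2 \<Rightarrow> real^2" and p :: "nat \<Rightarrow> real^2 \<Rightarrow> real" and N n :: nat
  assumes o: "open \<Omega>" and b: "bounded \<Omega>" and tau: "\<tau> > 0" and nu: "\<nu> > 0"
  and fU: "fin_dim_subspaceV \<Omega> U" and fQ: "fin_dim_subspaceS \<Omega> Q"
  and fH: "\<forall>k\<le>N. Hminus1 \<Omega> (f (real k * \<tau>))"
  and uU: "\<forall>k\<le>N. u k \<in> U \<and> p k \<in> Q"
  and eqs: "\<forall>n. 1 \<le> n \<and> n + 1 \<le> N \<longrightarrow>
        (\<forall>v\<in>U.
           ipV \<Omega> (\<lambda>x. (1 / (2 * \<tau>)) *\<^sub>R (3 *\<^sub>R u (n+1) x - 4 *\<^sub>R u n x + u (n-1) x)) v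
           + \<nu> * gradV \<Omega> (u (n+1)) v
           - (1/3) * ipS \<Omega> (\<lambda>x. 7 * p n x - 5 * p (n-1) x + p (n-2) x) (divg \<Omega> v)
           = f (real (n+1) * \<tau>) v) \<and>
        (\<forall>q\<in>Q.
           ipS \<Omega> (divg \<Omega> (u (n+1))) q + (2 * \<tau> / 3) * gradS \<Omega> (p (n+1)) q
           = (2 * \<tau> / 3) * gradS \<Omega> (p n) q)"
  and n2: "2 \<le> n" and nN: "n \<le> N"
  shows "ipV \<Omega> (u n) (u n) + \<tau>^2 * gradS \<Omega> (p n) (p n)
        + \<tau>^2 * gradS \<Omega> (\<lambda>x. p (n-1) x - p (n-2) x) (\<lambda>x. p (n-1) x - p (n-2) x)
        + (\<Sum>k=2..N. \<nu> * \<tau> * gradV \<Omega> (u k) (u k)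
              + \<tau>^2 * gradS \<Omega> (\<lambda>x. p (k-1) x - p (k-2) x) (\<lambda>x. p (k-1) x - p (k-2) x))
        \<le> 700 * (ipV \<Omega> (u 0) (u 0) + ipV \<Omega> (u 1) (u 1)
              + \<tau>^2 * gradS \<Omega> (p 0) (p 0) + \<tau>^2 * gradS \<Omega> (p 1) (p 1)
              + (1 / \<nu>) * (\<Sum>k=2..N. \<tau> * (normHm1 \<Omega> (f (real k * \<tau>)))^2))"
proof -
  interpret ip: ipsp "SS \<Omega>" "ipV \<Omega>" by (rule SS_ipsp)
  have uH: "k \<le> N \<Longrightarrow> H01V \<Omega> (u k)" for k using uU U_H01V[OF fU] by blast
  have uS: "k \<le> N \<Longrightarrow> u k \<in> SS \<Omega>" for k using uH unfolding SS_def using H01V_H1 H1_L2 by blast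
  have pH: "k \<le> N \<Longrightarrow> H1 \<Omega> (p k)" for k using uU Q_H1[OF fQ] by blast
  have pL: "k \<le> N \<Longrightarrow> L2 \<Omega> (p k)" for k using pH H1_L2 by blast
  have gS: "k \<le> N \<Longrightarrow> gf \<Omega> (p k) \<in> SS \<Omega>" for k unfolding SS_def using pH wpd_spec by auto
  define G where "G k = \<tau> *\<^sub>R gf \<Omega> (p k)" for k
  have GS: "k \<le> N \<Longrightarrow> G k \<in> SS \<Omega>" for k unfolding G_def using gS by simp
  define A where "A k = gradV \<Omega> (u k) (u k)" for k
  define FF where "FF k = f (real k * \<tau>) (u k)" for k
  define fn where "fn k = normHm1 \<Omega> (f (real k * \<tau>))" for k
  have sch: "scheme (SS \<Omega>) (ipV \<Omega>) N \<tau> \<nu> u G A FF fn"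
  proof (rule scheme.intro[OF SS_ipsp], unfold_locales)
    show "\<tau> > 0" by fact
    show "\<nu> > 0" by fact
    show "\<And>k. k \<le> N \<Longrightarrow> u k \<in> SS \<Omega>" by (rule uS)
    show "\<And>k. k \<le> N \<Longrightarrow> G k \<in> SS \<Omega>" by (rule GS)
  next
    fix n assume n1: "1 \<le> n" "n + 1 \<le> N"
    have mem: "u (n+1) \<in> SS \<Omega>" "u n \<in> SS \<Omega>" "u (n-1) \<in> SS \<Omega>" "gf \<Omega> (p n) \<in> SS \<Omega>" "gf \<Omega> (p (n-1)) \<in> SS \<Omega>"
      "gf \<Omega> (p (n-2)) \<in> SS \<Omega>" using uS gS n1 by auto
    have uU': "u (n+1) \<in> U" using uU n1 by simp
    have eq1: "ipV \<Omega> (\<lambda>x. (1 / (2 * \<tau>)) *\<^sub>R (3 *\<^sub>R u (n+1) x - 4 *\<^sub>R u n x + u (n-1) x)) (u (n+1))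
           + \<nu> * gradV \<Omega> (u (n+1)) (u (n+1))
           - (1/3) * ipS \<Omega> (\<lambda>x. 7 * p n x - 5 * p (n-1) x + p (n-2) x) (divg \<Omega> (u (n+1)))
           = f (real (n+1) * \<tau>) (u (n+1))" using eqs n1 uU' by blast
    have fe: "(\<lambda>x. (1 / (2 * \<tau>)) *\<^sub>R (3 *\<^sub>R u (n+1) x - 4 *\<^sub>R u n x + u (n-1) x))
       = (1 / (2 * \<tau>)) *\<^sub>R (3 *\<^sub>R u (n+1) - 4 *\<^sub>R u n + u (n-1))" by (simp add: fun_eq_iff)
    have T1: "ipV \<Omega> (\<lambda>x. (1 / (2 * \<tau>)) *\<^sub>R (3 *\<^sub>R u (n+1) x - 4 *\<^sub>R u n x + u (n-1) x)) (u (n+1))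
       = ipV \<Omega> (3 *\<^sub>R u (n+1) - 4 *\<^sub>R u n + u (n-1)) (u (n+1)) / (2 * \<tau>)"
      unfolding fe using mem by (simp add: ip.scal_l)
    have dL: "L2 \<Omega> (divg \<Omega> (u (n+1)))" using divg_L2 uH n1 by simp
    have pL3: "L2 \<Omega> (p n)" "L2 \<Omega> (p (n-1))" "L2 \<Omega> (p (n-2))" using pL n1 by auto
    have fe2: "(\<lambda>x. 7 * p n x - 5 * p (n-1) x + p (n-2) x) = (\<lambda>x. 1 * (\<lambda>x. 7 * p n x + (-5) * p (n-1) x) x + 1 * p (n-2) x)"
      by (simp add: fun_eq_iff)
    have T3: "ipS \<Omega> (\<lambda>x. 7 * p n x - 5 * p (n-1) x + p (n-2) x) (divg \<Omega> (u (n+1)))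
       = 7 * ipS \<Omega> (p n) (divg \<Omega> (u (n+1))) - 5 * ipS \<Omega> (p (n-1)) (divg \<Omega> (u (n+1))) + ipS \<Omega> (p (n-2)) (divg \<Omega> (u (n+1)))"
    proof -
      have L7: "L2 \<Omega> (\<lambda>x. 7 * p n x + (-5) * p (n-1) x)" using pL3 L2_lin by blast
      show ?thesis unfolding fe2 using ipS_lin[OF L7 pL3(3) dL, of 1 1] ipS_lin[OF pL3(1) pL3(2) dL, of 7 "-5"] by simp
    qed
    have D: "ipS \<Omega> (p k) (divg \<Omega> (u (n+1))) = - ipV \<Omega> (u (n+1)) (gf \<Omega> (p k))" if "k \<le> N" for k
      using div_ibp[OF o b] uH pH n1 that by simp
    have T4: "ipV \<Omega> (7 *\<^sub>R G n - 5 *\<^sub>R G (n-1) + G (n-2)) (u (n+1))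
       = \<tau> * (7 * ipV \<Omega> (gf \<Omega> (p n)) (u (n+1)) - 5 * ipV \<Omega> (gf \<Omega> (p (n-1))) (u (n+1)) + ipV \<Omega> (gf \<Omega> (p (n-2))) (u (n+1)))"
      unfolding G_def using mem by (simp add: ip.ipx algebra_simps)
    have sy: "ipV \<Omega> (gf \<Omega> (p k)) (u (n+1)) = ipV \<Omega> (u (n+1)) (gf \<Omega> (p k))" for k by (rule ip.sym)
    have Dn: "ipS \<Omega> (p n) (divg \<Omega> (u (n+1))) = - ipV \<Omega> (u (n+1)) (gf \<Omega> (p n))" using D n1 by simp
    have Dn1: "ipS \<Omega> (p (n-1)) (divg \<Omega> (u (n+1))) = - ipV \<Omega> (u (n+1)) (gf \<Omega> (p (n-1)))" using D n1 by simp
    have Dn2: "ipS \<Omega> (p (n-2)) (divg \<Omega> (u (n+1))) = - ipV \<Omega> (u (n+1)) (gf \<Omega> (p (n-2)))" using D n1 by simp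
    have e1': "ipV \<Omega> (3 *\<^sub>R u (n+1) - 4 *\<^sub>R u n + u (n-1)) (u (n+1)) / (2 * \<tau>) + \<nu> * gradV \<Omega> (u (n+1)) (u (n+1))
       - (1/3) * (7 * (- ipV \<Omega> (u (n+1)) (gf \<Omega> (p n))) - 5 * (- ipV \<Omega> (u (n+1)) (gf \<Omega> (p (n-1))))
          + (- ipV \<Omega> (u (n+1)) (gf \<Omega> (p (n-2))))) = f (real (n+1) * \<tau>) (u (n+1))"
      using eq1 unfolding T1 T3 Dn Dn1 Dn2 .
    have Y3: "ipV \<Omega> (7 *\<^sub>R G n - 5 *\<^sub>R G (n-1) + G (n-2)) (u (n+1)) / (3*\<tau>)
       = (7 * ipV \<Omega> (u (n+1)) (gf \<Omega> (p n)) - 5 * ipV \<Omega> (u (n+1)) (gf \<Omega> (p (n-1))) + ipV \<Omega> (u (n+1)) (gf \<Omega> (p (n-2)))) / 3"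
      unfolding T4 sy using tau by simp
    show "ipV \<Omega> (3 *\<^sub>R u (n+1) - 4 *\<^sub>R u n + u (n-1)) (u (n+1)) / (2*\<tau>) + \<nu> * A (n+1)
     + ipV \<Omega> (7 *\<^sub>R G n - 5 *\<^sub>R G (n-1) + G (n-2)) (u (n+1)) / (3*\<tau>) = FF (n+1)"
      unfolding A_def FF_def Y3 using e1' by argo
  next
    fix n j assume n1: "1 \<le> n" "n + 1 \<le> N" and j: "j \<le> N"
    have eq2: "ipS \<Omega> (divg \<Omega> (u (n+1))) (p j) + (2 * \<tau> / 3) * gradS \<Omega> (p (n+1)) (p j)
           = (2 * \<tau> / 3) * gradS \<Omega> (p n) (p j)" using eqs n1 uU j by blast
    have d: "ipS \<Omega> (divg \<Omega> (u (n+1))) (p j) = - ipV \<Omega> (u (n+1)) (gf \<Omega> (p j))"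
      using div_ibp[OF o b] uH pH n1 j ipS_sym by metis
    have g1: "gradS \<Omega> (p (n+1)) (p j) = ipV \<Omega> (gf \<Omega> (p (n+1))) (gf \<Omega> (p j))" using gradS_gf pH n1 j by simp
    have g2: "gradS \<Omega> (p n) (p j) = ipV \<Omega> (gf \<Omega> (p n)) (gf \<Omega> (p j))" using gradS_gf pH n1 j by simp
    have mem: "u (n+1) \<in> SS \<Omega>" "gf \<Omega> (p (n+1)) \<in> SS \<Omega>" "gf \<Omega> (p n) \<in> SS \<Omega>" "gf \<Omega> (p j) \<in> SS \<Omega>"
      using uS gS n1 j by auto
    have l: "ipV \<Omega> (u (n+1)) (G j) = \<tau> * ipV \<Omega> (u (n+1)) (gf \<Omega> (p j))"
      unfolding G_def using mem by (simp add: ip.ipx)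
    have r: "ipV \<Omega> (G (n+1) - G n) (G j) = \<tau> * \<tau> * (ipV \<Omega> (gf \<Omega> (p (n+1))) (gf \<Omega> (p j)) - ipV \<Omega> (gf \<Omega> (p n)) (gf \<Omega> (p j)))"
      unfolding G_def using mem by (simp add: ip.ipx algebra_simps)
    show "ipV \<Omega> (u (n+1)) (G j) = (2/3) * ipV \<Omega> (G (n+1) - G n) (G j)"
    proof -
      have "- ipV \<Omega> (u (n+1)) (gf \<Omega> (p j)) + (2 * \<tau> / 3) * ipV \<Omega> (gf \<Omega> (p (n+1))) (gf \<Omega> (p j))
          = (2 * \<tau> / 3) * ipV \<Omega> (gf \<Omega> (p n)) (gf \<Omega> (p j))" using eq2 unfolding d g1 g2 .
      then have X: "ipV \<Omega> (u (n+1)) (gf \<Omega> (p j)) = (2 * \<tau> / 3) * (ipV \<Omega> (gf \<Omega> (p (n+1))) (gf \<Omega> (p j)) - ipV \<Omega> (gf \<Omega> (p n)) (gf \<Omega> (p j)))"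
        by (simp add: algebra_simps)
      show ?thesis unfolding l r X by (simp add: algebra_simps)
    qed
  next
    fix k assume k: "2 \<le> k" "k \<le> N"
    show "\<bar>FF k\<bar> \<le> fn k * sqrt (A k) \<and> 0 \<le> A k"
      unfolding FF_def fn_def A_def using normHm1_bound[OF o b _ fU] fH uU k gradV_nonneg by simp
  qed
  interpret E: scheme "SS \<Omega>" "ipV \<Omega>" N \<tau> \<nu> u G A FF fn by (rule sch)
  have fin: "ip.nrm (u n) + ip.nrm (G n) + ip.nrm (G (n-1) - G (n-2))
     + (\<Sum>k=2..N. \<nu> * \<tau> * A k + ip.nrm (G (k-1) - G (k-2)))
     \<le> 700 * (ip.nrm (u 0) + ip.nrm (u 1) + ip.nrm (G 0) + ip.nrm (G 1) + (1/\<nu>) * (\<Sum>k=2..N. \<tau> * (fn k)^2))"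
    by (rule E.final[OF n2 nN])
  have c1: "ip.nrm (G k) = \<tau>^2 * gradS \<Omega> (p k) (p k)" if "k \<le> N" for k
    unfolding ip.nrm_def G_def using gS[OF that] gradS_gf[OF pH[OF that] pH[OF that]]
    by (simp add: ip.ipx power2_eq_square)
  have c2: "ip.nrm (G a - G c) = \<tau>^2 * gradS \<Omega> (\<lambda>x. p a x - p c x) (\<lambda>x. p a x - p c x)" if "a \<le> N" "c \<le> N" for a c
  proof -
    have m: "gf \<Omega> (p a) - gf \<Omega> (p c) \<in> SS \<Omega>" using gS that by simp
    have "G a - G c = \<tau> *\<^sub>R (gf \<Omega> (p a) - gf \<Omega> (p c))" unfolding G_def by (simp add: scaleR_diff_right)
    then have "ip.nrm (G a - G c) = \<tau>^2 * ipV \<Omega> (gf \<Omega> (p a) - gf \<Omega> (p c)) (gf \<Omega> (p a) - gf \<Omega> (p c))"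
      unfolding ip.nrm_def using m by (simp add: ip.ipx power2_eq_square)
    also have "ipV \<Omega> (gf \<Omega> (p a) - gf \<Omega> (p c)) (gf \<Omega> (p a) - gf \<Omega> (p c))
       = gradS \<Omega> (\<lambda>x. p a x - p c x) (\<lambda>x. p a x - p c x)"
      using m unfolding grad_diff[OF o b pH[OF that(1)] pH[OF that(2)]]
      by (subst ipV_comp) (auto simp: SS_def)
    finally show ?thesis .
  qed
  have c3: "ip.nrm x = ipV \<Omega> x x" for x unfolding ip.nrm_def ..
  have sumeq: "(\<Sum>k=2..N. \<nu> * \<tau> * A k + ip.nrm (G (k-1) - G (k-2)))
     = (\<Sum>k=2..N. \<nu> * \<tau> * gradV \<Omega> (u k) (u k)
              + \<tau>^2 * gradS \<Omega> (\<lambda>x. p (k-1) x - p (k-2) x) (\<lambda>x. p (k-1) x - p (k-2) x))"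
  proof (rule sum.cong[OF refl])
    fix k assume "k \<in> {2..N}"
    then have "k - 1 \<le> N" "k - 2 \<le> N" by auto
    then show "\<nu> * \<tau> * A k + ip.nrm (G (k-1) - G (k-2)) = \<nu> * \<tau> * gradV \<Omega> (u k) (u k)
              + \<tau>^2 * gradS \<Omega> (\<lambda>x. p (k-1) x - p (k-2) x) (\<lambda>x. p (k-1) x - p (k-2) x)"
      unfolding A_def c2[OF \<open>k - 1 \<le> N\<close> \<open>k - 2 \<le> N\<close>] by simp
  qed
  have n12: "n - 1 \<le> N" "n - 2 \<le> N" using nN by auto
  have N01: "0 \<le> N" "1 \<le> N" using nN n2 by auto
  have sumf: "(\<Sum>k=2..N. \<tau> * (fn k)^2) = (\<Sum>k=2..N. \<tau> * (normHm1 \<Omega> (f (real k * \<tau>)))^2)"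
    unfolding fn_def ..
  show ?thesis
    using fin unfolding sumeq sumf c1[OF nN] c1[OF N01(1)] c1[OF N01(2)] c2[OF n12] unfolding c3 .
qed

theorem mainTheorem1:
  fixes \<Omega> :: "(real^2) set" and T :: real
  assumes "smooth_bounded_domain \<Omega>" and "T > 0"
  shows "\<exists>c>0. \<forall>(\<tau>::real) (\<nu>::real) (f :: real \<Rightarrow> ((real^2 \<Rightarrow> real^2) \<Rightarrow> real))
      (U :: (real^2 \<Rightarrow> real^2) set) (Q :: (real^2 \<Rightarrow> real) set)
      (u :: nat \<Rightarrow> real^2 \<Rightarrow> real^2) (p :: nat \<Rightarrow> real^2 \<Rightarrow> real).
    (let Nt = nat \<lfloor>T / \<tau>\<rfloor> in
     \<tau> > 0 \<and> \<nu> > 0 \<and>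
     fin_dim_subspaceV \<Omega> U \<and> fin_dim_subspaceS \<Omega> Q \<and>
     (\<forall>k\<le>Nt. Hminus1 \<Omega> (f (real k * \<tau>))) \<and>
     (\<forall>k\<le>Nt. u k \<in> U \<and> p k \<in> Q) \<and>
     (\<forall>n. 1 \<le> n \<and> n + 1 \<le> Nt \<longrightarrow>
        (\<forall>v\<in>U.
           ipV \<Omega> (\<lambda>x. (1 / (2 * \<tau>)) *\<^sub>R (3 *\<^sub>R u (n+1) x - 4 *\<^sub>R u n x + u (n-1) x)) v
           + \<nu> * gradV \<Omega> (u (n+1)) v
           - (1/3) * ipS \<Omega> (\<lambda>x. 7 * p n x - 5 * p (n-1) x + p (n-2) x) (divg \<Omega> v)
           = f (real (n+1) * \<tau>) v) \<and>
        (\<forall>q\<in>Q.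
           ipS \<Omega> (divg \<Omega> (u (n+1))) q + (2 * \<tau> / 3) * gradS \<Omega> (p (n+1)) q
           = (2 * \<tau> / 3) * gradS \<Omega> (p n) q))
     \<longrightarrow>
     (\<forall>n. 2 \<le> n \<and> n \<le> Nt \<longrightarrow>
        ipV \<Omega> (u n) (u n) + \<tau>^2 * gradS \<Omega> (p n) (p n)
        + \<tau>^2 * gradS \<Omega> (\<lambda>x. p (n-1) x - p (n-2) x) (\<lambda>x. p (n-1) x - p (n-2) x)
        + (\<Sum>k=2..Nt. \<nu> * \<tau> * gradV \<Omega> (u k) (u k)
              + \<tau>^2 * gradS \<Omega> (\<lambda>x. p (k-1) x - p (k-2) x) (\<lambda>x. p (k-1) x - p (k-2) x))
        \<le> c * (ipV \<Omega> (u 0) (u 0) + ipV \<Omega> (u 1) (u 1)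
              + \<tau>^2 * gradS \<Omega> (p 0) (p 0) + \<tau>^2 * gradS \<Omega> (p 1) (p 1)
              + (1 / \<nu>) * (\<Sum>k=2..Nt. \<tau> * (normHm1 \<Omega> (f (real k * \<tau>)))^2))))"
proof -
  have o: "open \<Omega>" and b: "bounded \<Omega>" using assms(1) unfolding smooth_bounded_domain_def by auto
  show ?thesis
    unfolding Let_def
    apply (rule exI[of _ 700])
    apply (intro conjI allI impI)
     apply simp
    apply (elim conjE)
    apply (rule main_lemma[OF o b])
             apply assumption+
    done
qed

end
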